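(* Let $\mathfrak g$ be the Lie algebra of the isometry group of a rank $1$ symmetric space $M$ of noncompact type, and let $\mathcal N$ be the space defined below. Then: (1) if $M=\mathbb H^n$ ($n\ge2$), then $\mathfrak n=\mathfrak g_\alpha\cong\mathbb R^{n-1}$ and $\mathcal N=\{h\in\mathrm{Sym}_2\mathbb R^{n-1}:\mathrm{tr}\,h=0\}$; (2) if $M=\mathbb{CH}^{2n}$ (real dimension $2n$, $n\ge2$), then $\mathfrak n=\mathfrak g_\alpha\oplus\mathfrak g_{2\alpha}\cong\mathbb C^{n-1}\oplus\mathbb R$, and, viewing $\mathbb C^{n-1}$ as a real vector space with $J$ the multiplication by $i$, $\mathcal N=\{h\in\mathrm{Sym}_2\mathbb C^{n-1}:Jh+hJ=0\}$ (extended by zero on $\mathfrak g_{2\alpha}$); (3) if $M$ is the quaternionic hyperbolic space $\mathbb{HH}^{4n}$ ($n\ge2$) or the octonionic hyperbolic plane $\mathbb{OH}^{16}$, then $\mathcal N=\{0\}$.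
   Context: Notation: $\mathfrak g=\mathfrak p\oplus\mathfrak k$ Cartan decomposition with involution $\sigma$, Killing form $\langle\cdot,\cdot\rangle$, maximal abelian $\mathfrak a\subset\mathfrak p$ (one-dimensional), positive roots $\alpha$ (and $2\alpha$ in the non-real cases), $\mathfrak n=\bigoplus_{\beta\in\Delta^+}\mathfrak g_\beta$ with inner product $(x,y)=-\langle x,\sigma y\rangle$. Symmetric bilinear forms on the orthogonal complement of $\mathfrak a$ in $\mathfrak p$ are identified with $(\cdot,\cdot)$-self-adjoint endomorphisms of $\mathfrak n$ via $x\mapsto\frac1{\sqrt2}(x-\sigma x)$. $\mathcal N$ is the set of self-adjoint endomorphisms $h$ of $\mathfrak n$ such that (a) $h(\mathfrak g_\beta)\subset\mathfrak g_\beta$ for every positive root $\beta$; (b) $h[x,y]=[hx,y]+[x,hy]$ for all $x,y\in\mathfrak n$ (i.e. $h$ is a derivation of $\mathfrak n$); (c) $\sum_{\beta\in\Delta^+}\mathrm{tr}(h|_{\mathfrak g_\beta})\,\beta=0$ in $\mathfrak a^*$. Models: with $\mathbb K\in\{\mathbb R,\mathbb C,\mathbb H,\mathbb O\}$, $\mathfrak g_\alpha=\mathbb K^{n-1}$ (with $n=2$ for $\mathbb O$), $\mathfrak g_{2\alpha}=\mathrm{Im}\,\mathbb K$, and $[v,w]=2\,\mathrm{Im}\sum_i\bar v_iw_i$ for $v,w\in\mathfrak g_\alpha$. *)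

theory Defs
  imports Complex_Main
begin

text \<open>Real models of the normed division algebras via the Cayley--Dickson
construction.  An element of the algebra of level k (real dimension 2^k:
k = 0,1,2,3 gives R, C, H, O) is a function nat => real supported on
{0..<2^k}; coordinate 0 is the real part.\<close>

definition cd_lo :: "nat \<Rightarrow> (nat \<Rightarrow> real) \<Rightarrow> (nat \<Rightarrow> real)" where
  "cd_lo k x = (\<lambda>i. if i < 2^k then x i else 0)"

definition cd_hi :: "nat \<Rightarrow> (nat \<Rightarrow> real) \<Rightarrow> (nat \<Rightarrow> real)" where
  "cd_hi k x = (\<lambda>i. if i < 2^k then x (i + 2^k) else 0)"

definition cd_join :: "nat \<Rightarrow> (nat \<Rightarrow> real) \<Rightarrow> (nat \<Rightarrow> real) \<Rightarrow> (nat \<Rightarrow> real)" where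
  "cd_join k a b = (\<lambda>i. if i < 2^k then a i else if i < 2^Suc k then b (i - 2^k) else 0)"

fun cd_conj :: "nat \<Rightarrow> (nat \<Rightarrow> real) \<Rightarrow> (nat \<Rightarrow> real)" where
  "cd_conj 0 x = (\<lambda>i. if i = 0 then x 0 else 0)"
| "cd_conj (Suc k) x = cd_join k (cd_conj k (cd_lo k x)) (\<lambda>i. - cd_hi k x i)"

text \<open>(a,b)(c,d) = (ac - conj(d) b, d a + b conj(c)).\<close>
fun cd_mult :: "nat \<Rightarrow> (nat \<Rightarrow> real) \<Rightarrow> (nat \<Rightarrow> real) \<Rightarrow> (nat \<Rightarrow> real)" where
  "cd_mult 0 x y = (\<lambda>i. if i = 0 then x 0 * y 0 else 0)"
| "cd_mult (Suc k) x y =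
     cd_join k
       (\<lambda>i. cd_mult k (cd_lo k x) (cd_lo k y) i
             - cd_mult k (cd_conj k (cd_hi k y)) (cd_hi k x) i)
       (\<lambda>i. cd_mult k (cd_hi k y) (cd_lo k x) i
             + cd_mult k (cd_hi k x) (cd_conj k (cd_lo k y)) i)"

definition cd_im :: "nat \<Rightarrow> (nat \<Rightarrow> real) \<Rightarrow> (nat \<Rightarrow> real)" where
  "cd_im k x = (\<lambda>i. if 0 < i \<and> i < 2^k then x i else 0)"

text \<open>The nilpotent algebra n = g_alpha + g_2alpha = K^m + Im K, K of level k.
An element is a pair (v, z): v i j is the j-th real coordinate of the i-th
K-component (i < m), z j the j-th coordinate of the Im K-part (0 < j < 2^k).\<close>

type_synonym nvec = "(nat \<Rightarrow> nat \<Rightarrow> real) \<times> (nat \<Rightarrow> real)"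

definition nzero :: nvec where "nzero = ((\<lambda>_ _. 0), (\<lambda>_. 0))"

definition nadd :: "nvec \<Rightarrow> nvec \<Rightarrow> nvec" where
  "nadd x y = ((\<lambda>i j. fst x i j + fst y i j), (\<lambda>j. snd x j + snd y j))"

definition nscale :: "real \<Rightarrow> nvec \<Rightarrow> nvec" where
  "nscale c x = ((\<lambda>i j. c * fst x i j), (\<lambda>j. c * snd x j))"

definition nn :: "nat \<Rightarrow> nat \<Rightarrow> nvec set" where
  "nn k m = {(v, z). (\<forall>i j. (m \<le> i \<or> 2^k \<le> j) \<longrightarrow> v i j = 0)
                    \<and> z 0 = 0 \<and> (\<forall>j. 2^k \<le> j \<longrightarrow> z j = 0)}"

definition galpha :: "nat \<Rightarrow> nat \<Rightarrow> nvec set" where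
  "galpha k m = {(v, z). (\<forall>i j. (m \<le> i \<or> 2^k \<le> j) \<longrightarrow> v i j = 0) \<and> z = (\<lambda>_. 0)}"

definition g2alpha :: "nat \<Rightarrow> nat \<Rightarrow> nvec set" where
  "g2alpha k m = {(v, z). v = (\<lambda>_ _. 0) \<and> z 0 = 0 \<and> (\<forall>j. 2^k \<le> j \<longrightarrow> z j = 0)}"

text \<open>Bracket: [v + z, v' + z'] = 2 Im sum_i conj(v_i) v'_i  (g_2alpha is central).\<close>
definition nbr :: "nat \<Rightarrow> nat \<Rightarrow> nvec \<Rightarrow> nvec \<Rightarrow> nvec" where
  "nbr k m x y = ((\<lambda>_ _. 0),
     (\<lambda>j. 2 * cd_im k (\<lambda>j'. \<Sum>i<m. cd_mult k (cd_conj k (fst x i)) (fst y i) j') j))"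

definition ninner :: "nat \<Rightarrow> nat \<Rightarrow> nvec \<Rightarrow> nvec \<Rightarrow> real" where
  "ninner k m x y = (\<Sum>i<m. \<Sum>j<2^k. fst x i j * fst y i j) + (\<Sum>j<2^k. snd x j * snd y j)"

definition nendo :: "nat \<Rightarrow> nat \<Rightarrow> (nvec \<Rightarrow> nvec) \<Rightarrow> bool" where
  "nendo k m h \<longleftrightarrow> (\<forall>x\<in>nn k m. h x \<in> nn k m)
     \<and> (\<forall>x\<in>nn k m. \<forall>y\<in>nn k m. h (nadd x y) = nadd (h x) (h y))
     \<and> (\<forall>c. \<forall>x\<in>nn k m. h (nscale c x) = nscale c (h x))"

definition selfadj :: "nat \<Rightarrow> nat \<Rightarrow> (nvec \<Rightarrow> nvec) \<Rightarrow> bool" where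
  "selfadj k m h \<longleftrightarrow> (\<forall>x\<in>nn k m. \<forall>y\<in>nn k m. ninner k m (h x) y = ninner k m x (h y))"

definition ea :: "nat \<Rightarrow> nat \<Rightarrow> nvec" where
  "ea i j = ((\<lambda>i' j'. if i' = i \<and> j' = j then 1 else 0), (\<lambda>_. 0))"

definition ez :: "nat \<Rightarrow> nvec" where
  "ez j = ((\<lambda>_ _. 0), (\<lambda>j'. if j' = j then 1 else 0))"

definition tr_alpha :: "nat \<Rightarrow> nat \<Rightarrow> (nvec \<Rightarrow> nvec) \<Rightarrow> real" where
  "tr_alpha k m h = (\<Sum>i<m. \<Sum>j<2^k. fst (h (ea i j)) i j)"

definition tr_2alpha :: "nat \<Rightarrow> nat \<Rightarrow> (nvec \<Rightarrow> nvec) \<Rightarrow> real" where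
  "tr_2alpha k m h = (\<Sum>j\<in>{1..<2^k}. snd (h (ez j)) j)"

text \<open>The space N: self-adjoint endomorphisms preserving root spaces, derivations,
with sum_beta tr(h|g_beta) beta = (tr_alpha + 2 tr_2alpha) alpha = 0.\<close>
definition NN :: "nat \<Rightarrow> nat \<Rightarrow> (nvec \<Rightarrow> nvec) set" where
  "NN k m = {h. nendo k m h \<and> selfadj k m h
      \<and> (\<forall>x\<in>galpha k m. h x \<in> galpha k m)
      \<and> (\<forall>x\<in>g2alpha k m. h x \<in> g2alpha k m)
      \<and> (\<forall>x\<in>nn k m. \<forall>y\<in>nn k m.
            h (nbr k m x y) = nadd (nbr k m (h x) y) (nbr k m x (h y)))
      \<and> tr_alpha k m h + 2 * tr_2alpha k m h = 0}"

text \<open>Complex structure J (multiplication by i) on g_alpha = C^m.\<close>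
definition cJ :: "nvec \<Rightarrow> nvec" where
  "cJ x = ((\<lambda>i. cd_mult 1 (\<lambda>j. if j = 1 then 1 else 0) (fst x i)), (\<lambda>_. 0))"

end

theory Submission
  imports Defs
begin


definition unit :: "nat \<Rightarrow> nat \<Rightarrow> real" where "unit l = (\<lambda>j. if j = l then 1 else 0)"

lemma unit_app: "unit l j = (if j = l then 1 else 0)" by (simp add: unit_def)

lemma cd_mult_hi0: "2^k \<le> j \<Longrightarrow> cd_mult k a b j = 0"
  by (cases k) (auto simp: cd_join_def)

lemma cd_lo0[simp]: "cd_lo k (\<lambda>_. 0) = (\<lambda>_. 0)" by (simp add: cd_lo_def)
lemma cd_hi0[simp]: "cd_hi k (\<lambda>_. 0) = (\<lambda>_. 0)" by (simp add: cd_hi_def)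
lemma cd_join0[simp]: "cd_join k (\<lambda>_. 0) (\<lambda>_. 0) = (\<lambda>_. 0)" by (simp add: cd_join_def fun_eq_iff)

lemma cd_zero_all: "cd_conj k (\<lambda>_. 0) = (\<lambda>_. 0) \<and> (\<forall>b. cd_mult k (\<lambda>_. 0) b = (\<lambda>_. 0))
   \<and> (\<forall>a. cd_mult k a (\<lambda>_. 0) = (\<lambda>_. 0))"
proof (induction k)
  case 0
  then show ?case by (auto simp: fun_eq_iff)
next
  case (Suc k)
  then show ?case by simp
qed

lemma cd_conj0[simp]: "cd_conj k (\<lambda>_. 0) = (\<lambda>_. 0)" using cd_zero_all by blast
lemma cd_mult0l[simp]: "cd_mult k (\<lambda>_. 0) b = (\<lambda>_. 0)" using cd_zero_all by blast
lemma cd_mult0r[simp]: "cd_mult k a (\<lambda>_. 0) = (\<lambda>_. 0)" using cd_zero_all by blast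

lemma nn_iff: "x \<in> nn k m \<longleftrightarrow> (\<forall>i j. (m \<le> i \<or> 2^k \<le> j) \<longrightarrow> fst x i j = 0) \<and> snd x 0 = 0
   \<and> (\<forall>j. 2^k \<le> j \<longrightarrow> snd x j = 0)"
  by (cases x) (simp add: nn_def)
lemma galpha_iff: "x \<in> galpha k m \<longleftrightarrow> (\<forall>i j. (m \<le> i \<or> 2^k \<le> j) \<longrightarrow> fst x i j = 0) \<and> snd x = (\<lambda>_. 0)"
  by (cases x) (simp add: galpha_def)
lemma g2alpha_iff: "x \<in> g2alpha k m \<longleftrightarrow> fst x = (\<lambda>_ _. 0) \<and> snd x 0 = 0 \<and> (\<forall>j. 2^k \<le> j \<longrightarrow> snd x j = 0)"
  by (cases x) (simp add: g2alpha_def)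

lemma galpha_nn: "x \<in> galpha k m \<Longrightarrow> x \<in> nn k m" by (simp add: galpha_iff nn_iff)
lemma g2alpha_nn: "x \<in> g2alpha k m \<Longrightarrow> x \<in> nn k m" by (simp add: g2alpha_iff nn_iff)

lemma nvec_eq: "(x::nvec) = y \<longleftrightarrow> (\<forall>i j. fst x i j = fst y i j) \<and> (\<forall>j. snd x j = snd y j)"
  by (cases x; cases y) (auto simp: fun_eq_iff)

lemma fst_nadd[simp]: "fst (nadd x y) = (\<lambda>i j. fst x i j + fst y i j)" by (simp add: nadd_def)
lemma snd_nadd[simp]: "snd (nadd x y) = (\<lambda>j. snd x j + snd y j)" by (simp add: nadd_def)
lemma fst_nscale[simp]: "fst (nscale c x) = (\<lambda>i j. c * fst x i j)" by (simp add: nscale_def)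
lemma snd_nscale[simp]: "snd (nscale c x) = (\<lambda>j. c * snd x j)" by (simp add: nscale_def)
lemma fst_nzero[simp]: "fst nzero = (\<lambda>_ _. 0)" by (simp add: nzero_def)
lemma snd_nzero[simp]: "snd nzero = (\<lambda>_. 0)" by (simp add: nzero_def)
lemma fst_ea[simp]: "fst (ea i a) = (\<lambda>i' j'. if i' = i \<and> j' = a then 1 else 0)" by (simp add: ea_def)
lemma snd_ea[simp]: "snd (ea i a) = (\<lambda>_. 0)" by (simp add: ea_def)
lemma fst_ez[simp]: "fst (ez l) = (\<lambda>_ _. 0)" by (simp add: ez_def)
lemma snd_ez[simp]: "snd (ez l) = (\<lambda>j. if j = l then 1 else 0)" by (simp add: ez_def)
lemma fst_nbr[simp]: "fst (nbr k m x y) = (\<lambda>_ _. 0)" by (simp add: nbr_def)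

lemma nadd_nzero[simp]: "nadd nzero nzero = nzero" by (simp add: nvec_eq)
lemma nzero_nn[simp]: "nzero \<in> nn k m" by (simp add: nn_iff)
lemma nzero_galpha[simp]: "nzero \<in> galpha k m" by (simp add: galpha_iff)
lemma nzero_g2alpha[simp]: "nzero \<in> g2alpha k m" by (simp add: g2alpha_iff)
lemma ez_g2alpha: "0 < l \<Longrightarrow> l < 2^k \<Longrightarrow> ez l \<in> g2alpha k m" by (auto simp: g2alpha_iff)
lemma ea_galpha: "i < m \<Longrightarrow> a < 2^k \<Longrightarrow> ea i a \<in> galpha k m" by (auto simp: galpha_iff)

lemma nbr_g2alpha: "nbr k m x y \<in> g2alpha k m"
  by (simp add: g2alpha_iff nbr_def cd_im_def)

lemma nbr_zero_l[simp]: "nbr k m nzero y = nzero"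
  by (simp add: nbr_def cd_im_def nzero_def)
lemma nbr_zero_r[simp]: "nbr k m x nzero = nzero"
  by (simp add: nbr_def cd_im_def nzero_def)

lemma ninner_sym: "ninner k m x y = ninner k m y x"
  by (simp add: ninner_def mult.commute)
lemma ninner_add: "ninner k m (nadd x y) w = ninner k m x w + ninner k m y w"
  by (simp add: ninner_def distrib_right sum.distrib)
lemma ninner_scale: "ninner k m (nscale c x) w = c * ninner k m x w"
  by (simp add: ninner_def sum_distrib_left distrib_left mult.assoc)
lemma ninner_zero_l[simp]: "ninner k m nzero w = 0"
  by (simp add: ninner_def)
lemma ninner_zero_r[simp]: "ninner k m w nzero = 0"
  by (simp add: ninner_def)

lemma ninner_self_zero:
  assumes "w \<in> nn k m" "ninner k m w w = 0" shows "w = nzero"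
proof -
  have A: "(\<Sum>i<m. \<Sum>j<2^k. fst w i j * fst w i j) + (\<Sum>j<2^k. snd w j * snd w j) = 0"
    using assms(2) by (simp add: ninner_def)
  have n1: "0 \<le> (\<Sum>i<m. \<Sum>j<2^k. fst w i j * fst w i j)" by (intro sum_nonneg) auto
  have n2: "0 \<le> (\<Sum>j<(2::nat)^k. snd w j * snd w j)" by (intro sum_nonneg) auto
  have s1: "(\<Sum>i<m. \<Sum>j<2^k. fst w i j * fst w i j) = 0" and s2: "(\<Sum>j<(2::nat)^k. snd w j * snd w j) = 0"
    using A n1 n2 by linarith+
  have f: "fst w i j = 0" for i j
  proof (cases "i < m \<and> j < 2^k")
    case True
    have "(\<Sum>j<2^k. fst w i j * fst w i j) = 0"
      using s1 True by (subst (asm) sum_nonneg_eq_0_iff) (auto intro: sum_nonneg)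
    then show ?thesis using True by (subst (asm) sum_nonneg_eq_0_iff) auto
  next
    case False
    then show ?thesis using assms(1) by (auto simp: nn_iff not_less)
  qed
  have s: "snd w j = 0" for j
  proof (cases "j < 2^k")
    case True
    then show ?thesis using s2 by (subst (asm) sum_nonneg_eq_0_iff) auto
  next
    case False
    then show ?thesis using assms(1) by (auto simp: nn_iff not_less)
  qed
  show ?thesis using f s by (simp add: nvec_eq)
qed

definition gA :: "nat \<Rightarrow> nat \<Rightarrow> (nat \<Rightarrow> nat \<Rightarrow> real) \<Rightarrow> (nat \<Rightarrow> nat \<Rightarrow> real) \<Rightarrow> real" where
  "gA k m v w = (\<Sum>i<m. \<Sum>j<2^k. v i j * w i j)"

lemma ninner_galpha: "y \<in> galpha k m \<Longrightarrow> ninner k m x y = gA k m (fst x) (fst y)"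
  by (simp add: galpha_iff ninner_def gA_def)

definition Rm :: "nat \<Rightarrow> nat \<Rightarrow> nvec \<Rightarrow> nvec" where
  "Rm k l x = ((\<lambda>i. cd_mult k (fst x i) (unit l)), (\<lambda>_. 0))"

lemma fst_Rm[simp]: "fst (Rm k l x) = (\<lambda>i. cd_mult k (fst x i) (unit l))" by (simp add: Rm_def)
lemma snd_Rm[simp]: "snd (Rm k l x) = (\<lambda>_. 0)" by (simp add: Rm_def)

lemma galpha_fst0: "x \<in> galpha k m \<Longrightarrow> m \<le> i \<Longrightarrow> fst x i = (\<lambda>_. 0)"
  by (auto simp: galpha_iff)

lemma Rm_galpha: assumes "x \<in> galpha k m" shows "Rm k l x \<in> galpha k m"
proof -
  have "cd_mult k (fst x i) (unit l) j = 0" if "m \<le> i \<or> 2^k \<le> j" for i j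
  proof (cases "m \<le> i")
    case True
    then show ?thesis using galpha_fst0[OF assms True] by simp
  next
    case False
    then show ?thesis using that cd_mult_hi0 by auto
  qed
  then show ?thesis by (simp add: galpha_iff)
qed

fun rvf :: "nat \<Rightarrow> nat list \<Rightarrow> (nat \<Rightarrow> real) \<Rightarrow> (nat \<Rightarrow> real)" where
  "rvf k [] a = a"
| "rvf k (l # ls) a = rvf k ls (cd_mult k a (unit l))"

fun Rv :: "nat \<Rightarrow> nat list \<Rightarrow> nvec \<Rightarrow> nvec" where
  "Rv k [] x = x"
| "Rv k (l # ls) x = Rv k ls (Rm k l x)"

lemma Rv_galpha: "x \<in> galpha k m \<Longrightarrow> Rv k ls x \<in> galpha k m"
  by (induction ls arbitrary: x) (auto simp: Rm_galpha)

lemma fst_Rv: "fst (Rv k ls x) i = rvf k ls (fst x i)"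
  by (induction ls arbitrary: x) auto

lemma rvf_hi: "ls \<noteq> [] \<Longrightarrow> 2^k \<le> j \<Longrightarrow> rvf k ls a j = 0"
proof (induction ls arbitrary: a)
  case Nil then show ?case by simp
next
  case (Cons l ls)
  then show ?case by (cases ls) (auto simp: cd_mult_hi0)
qed


lemma gA_sym: "gA k m v w = gA k m w v"
  by (simp add: gA_def mult.commute)

lemma galpha_add: "x \<in> galpha k m \<Longrightarrow> y \<in> galpha k m \<Longrightarrow> nadd x y \<in> galpha k m"
  by (simp add: galpha_iff)
lemma galpha_scale: "x \<in> galpha k m \<Longrightarrow> nscale c x \<in> galpha k m"
  by (simp add: galpha_iff)

lemma ninner_add2: "ninner k m w (nadd x y) = ninner k m w x + ninner k m w y"
  using ninner_add[of k m x y w] by (simp add: ninner_sym)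
lemma ninner_scale2: "ninner k m w (nscale c x) = c * ninner k m w x"
  using ninner_scale[of k m c x w] by (simp add: ninner_sym)

lemma nscale_nscale: "nscale c (nscale d x) = nscale (c * d) x"
  by (simp add: nvec_eq)

lemma NN_D:
  assumes "h \<in> NN k m"
  shows "nendo k m h" "selfadj k m h" "\<And>x. x \<in> galpha k m \<Longrightarrow> h x \<in> galpha k m"
    "\<And>x. x \<in> g2alpha k m \<Longrightarrow> h x \<in> g2alpha k m"
    "\<And>x y. x \<in> nn k m \<Longrightarrow> y \<in> nn k m \<Longrightarrow> h (nbr k m x y) = nadd (nbr k m (h x) y) (nbr k m x (h y))"
    "tr_alpha k m h + 2 * tr_2alpha k m h = 0"
  using assms by (auto simp: NN_def)

lemma hnn: "nendo k m h \<Longrightarrow> x \<in> nn k m \<Longrightarrow> h x \<in> nn k m" by (simp add: nendo_def)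
lemma hadd: "nendo k m h \<Longrightarrow> x \<in> nn k m \<Longrightarrow> y \<in> nn k m \<Longrightarrow> h (nadd x y) = nadd (h x) (h y)"
  by (simp add: nendo_def)
lemma hscale: "nendo k m h \<Longrightarrow> x \<in> nn k m \<Longrightarrow> h (nscale c x) = nscale c (h x)"
  by (simp add: nendo_def)
lemma hzero: "nendo k m h \<Longrightarrow> h nzero = nzero"
proof -
  assume e: "nendo k m h"
  have "nscale 0 nzero = nzero" by (simp add: nvec_eq)
  then have "h nzero = h (nscale 0 nzero)" by simp
  also have "\<dots> = nscale 0 (h nzero)" using hscale[OF e nzero_nn] .
  also have "\<dots> = nzero" by (simp add: nvec_eq)
  finally show ?thesis .
qed
lemma hsa: "selfadj k m h \<Longrightarrow> x \<in> nn k m \<Longrightarrow> y \<in> nn k m \<Longrightarrow> ninner k m (h x) y = ninner k m x (h y)"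
  by (simp add: selfadj_def)

lemma zero_on_g2alpha:
  assumes e: "nendo k m h" and ez: "\<And>l. 0 < l \<Longrightarrow> l < 2^k \<Longrightarrow> h (ez l) = nzero"
    and z: "z \<in> g2alpha k m"
  shows "h z = nzero"
proof -
  have "\<forall>z\<in>g2alpha k m. (\<forall>j\<ge>N. snd z j = 0) \<longrightarrow> h z = nzero" for N
  proof (induction N)
    case 0
    show ?case
    proof (intro ballI impI)
      fix z assume "z \<in> g2alpha k m" "\<forall>j\<ge>0. snd z j = 0"
      then have "z = nzero" by (simp add: nvec_eq g2alpha_iff)
      then show "h z = nzero" using hzero[OF e] by simp
    qed
  next
    case (Suc N)
    show ?case
    proof (intro ballI impI)
      fix z assume zg: "z \<in> g2alpha k m" and zs: "\<forall>j\<ge>Suc N. snd z j = 0"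
      define z' :: nvec where "z' = ((\<lambda>_ _. 0), (\<lambda>j. if j < N then snd z j else 0))"
      have z'g: "z' \<in> g2alpha k m" using zg by (auto simp: g2alpha_iff z'_def)
      have hz': "h z' = nzero" using Suc.IH z'g by (auto simp: z'_def)
      show "h z = nzero"
      proof (cases "snd z N = 0")
        case True
        have "z = z'" using zg zs True
          by (auto simp: nvec_eq z'_def g2alpha_iff) (metis Suc_leI le_neq_implies_less not_le)
        then show ?thesis using hz' by simp
      next
        case False
        have N0: "0 < N" using False zg by (auto simp: g2alpha_iff intro: Nat.gr0I)
        have Nk: "N < 2^k" using False zg by (auto simp: g2alpha_iff not_less[symmetric])
        have zz: "z = nadd z' (nscale (snd z N) (ez N))" using zg zs
          by (auto simp: nvec_eq z'_def g2alpha_iff)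
        have eN: "ez N \<in> nn k m" using N0 Nk by (intro g2alpha_nn ez_g2alpha)
        have sn: "nscale (snd z N) (ez N) \<in> nn k m" using N0 Nk by (auto simp: nn_iff)
        have "h z = h (nadd z' (nscale (snd z N) (ez N)))" by (rule arg_cong[where f=h, OF zz])
        also have "\<dots> = nadd (h z') (h (nscale (snd z N) (ez N)))"
          by (rule hadd[OF e g2alpha_nn[OF z'g] sn])
        also have "\<dots> = nadd (h z') (nscale (snd z N) (h (ez N)))"
          by (simp add: hscale[OF e eN])
        finally have "h z = nadd (h z') (nscale (snd z N) (h (ez N)))" .
        then show ?thesis using hz' ez[OF N0 Nk] by (simp add: nvec_eq)
      qed
    qed
  qed
  then show ?thesis using z by (auto simp: g2alpha_iff)
qed

lemma zero_on_nn:
  assumes e: "nendo k m h" and ga: "\<And>x. x \<in> galpha k m \<Longrightarrow> h x = nzero"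
    and g2: "\<And>z. z \<in> g2alpha k m \<Longrightarrow> h z = nzero" and x: "x \<in> nn k m"
  shows "h x = nzero"
proof -
  define xa :: nvec where "xa = (fst x, (\<lambda>_. 0))"
  define xz :: nvec where "xz = ((\<lambda>_ _. 0), snd x)"
  have a: "xa \<in> galpha k m" using x by (simp add: xa_def galpha_iff nn_iff)
  have z: "xz \<in> g2alpha k m" using x by (simp add: xz_def g2alpha_iff nn_iff)
  have "x = nadd xa xz" by (simp add: nvec_eq xa_def xz_def)
  then have "h x = nadd (h xa) (h xz)" using hadd[OF e galpha_nn[OF a] g2alpha_nn[OF z]] by simp
  then show ?thesis using ga[OF a] g2[OF z] by (simp add: nvec_eq)
qed

locale cdk =
  fixes k :: nat
  assumes A1: "\<And>a b l. 0 < l \<Longrightarrow> l < 2^k \<Longrightarrow>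
      cd_mult k (cd_conj k a) b l = (\<Sum>j<2^k. cd_mult k a (unit l) j * b j)"
  and A2: "\<And>a b l. 0 < l \<Longrightarrow> l < 2^k \<Longrightarrow>
      (\<Sum>j<2^k. cd_mult k a (unit l) j * b j) = - (\<Sum>j<2^k. a j * cd_mult k b (unit l) j)"
  and A3: "\<And>a l j. 0 < l \<Longrightarrow> l < 2^k \<Longrightarrow> j < 2^k \<Longrightarrow>
      cd_mult k (cd_mult k a (unit l)) (unit l) j = - a j"
  and A4: "\<And>a l l'. 0 < l \<Longrightarrow> l < 2^k \<Longrightarrow> 0 < l' \<Longrightarrow> l' < 2^k \<Longrightarrow>
      cd_mult k (cd_conj k a) (cd_mult k a (unit l)) l' = (if l' = l then (\<Sum>j<2^k. a j * a j) else 0)"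
  and A5: "\<And>a b c j. j < 2^k \<Longrightarrow> cd_mult k (\<lambda>j. a j + b j) c j = cd_mult k a c j + cd_mult k b c j"
  and A6: "\<And>a r c j. j < 2^k \<Longrightarrow> cd_mult k (\<lambda>j. r * a j) c j = r * cd_mult k a c j"
begin

lemma A5f: "cd_mult k (\<lambda>j. a j + b j) c = (\<lambda>j. cd_mult k a c j + cd_mult k b c j)"
  by (rule ext) (metis A5 add.right_neutral cd_mult_hi0 not_less)
lemma A6f: "cd_mult k (\<lambda>j. r * a j) c = (\<lambda>j. r * cd_mult k a c j)"
  by (rule ext) (metis A6 mult_zero_right cd_mult_hi0 not_less)

lemma nbr_snd: "snd (nbr k m p q) l =
   (if 0 < l \<and> l < 2^k then 2 * gA k m (fst (Rm k l p)) (fst q) else 0)"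
proof (cases "0 < l \<and> l < 2^k")
  case True
  have "(\<Sum>i<m. cd_mult k (cd_conj k (fst p i)) (fst q i) l)
      = (\<Sum>i<m. \<Sum>j<2^k. cd_mult k (fst p i) (unit l) j * fst q i j)"
    using True by (intro sum.cong) (auto simp: A1)
  then show ?thesis using True by (simp add: nbr_def cd_im_def gA_def)
next
  case False
  then show ?thesis by (auto simp: nbr_def cd_im_def)
qed

lemma gA_skew: "0 < l \<Longrightarrow> l < 2^k \<Longrightarrow>
   gA k m (\<lambda>i. cd_mult k (v i) (unit l)) w = - gA k m v (\<lambda>i. cd_mult k (w i) (unit l))"
  by (simp add: gA_def A2 sum_negf)

lemma Rm_Rm: assumes "x \<in> galpha k m" "0 < l" "l < 2^k"
  shows "Rm k l (Rm k l x) = nscale (-1) x"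
proof -
  have "cd_mult k (cd_mult k (fst x i) (unit l)) (unit l) j = - fst x i j" for i j
  proof (cases "j < 2^k")
    case True then show ?thesis using A3 assms by simp
  next
    case False then show ?thesis using assms(1) cd_mult_hi0 by (simp add: galpha_iff)
  qed
  then show ?thesis using assms(1) by (simp add: nvec_eq galpha_iff)
qed

lemma Rm_add: "Rm k l (nadd x y) = nadd (Rm k l x) (Rm k l y)"
  by (simp add: nvec_eq A5f)
lemma Rm_scale: "Rm k l (nscale c x) = nscale c (Rm k l x)"
  by (simp add: nvec_eq A6f)
lemma Rv_scale: "Rv k ls (nscale c x) = nscale c (Rv k ls x)"
  by (induction ls arbitrary: x) (auto simp: Rm_scale)

lemma nbr_sq: assumes x: "x \<in> galpha k m" and l: "0 < l" "l < 2^k"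
  shows "nbr k m x (Rm k l x) = nscale (2 * ninner k m x x) (ez l)"
proof -
  have nx: "ninner k m x x = (\<Sum>i<m. \<Sum>j<2^k. fst x i j * fst x i j)"
    using x by (simp add: ninner_def galpha_iff)
  have "snd (nbr k m x (Rm k l x)) j = 2 * ninner k m x x * (if j = l then 1 else 0)" for j
  proof (cases "0 < j \<and> j < 2^k")
    case True
    have "gA k m (fst (Rm k j x)) (fst (Rm k l x))
        = (\<Sum>i<m. cd_mult k (cd_conj k (fst x i)) (cd_mult k (fst x i) (unit l)) j)"
      using True by (simp add: gA_def A1)
    also have "\<dots> = (\<Sum>i<m. if j = l then (\<Sum>j<2^k. fst x i j * fst x i j) else 0)"
      using True l by (simp add: A4)
    finally show ?thesis using True nbr_snd nx by auto
  next
    case False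
    then have "j \<noteq> l" using l by auto
    then show ?thesis using False by (auto simp: nbr_snd)
  qed
  then show ?thesis by (simp add: nvec_eq)
qed

lemma star:
  assumes hN: "h \<in> NN k m" and x: "x \<in> galpha k m" and l: "0 < l" "l < 2^k"
  shows "snd (h (ez l)) l * ninner k m x x = ninner k m (h x) x + ninner k m (h (Rm k l x)) (Rm k l x)"
proof -
  note D = NN_D[OF hN]
  define y where "y = Rm k l x"
  have y: "y \<in> galpha k m" using x by (simp add: y_def Rm_galpha)
  have xn: "x \<in> nn k m" and yn: "y \<in> nn k m" using x y by (auto intro: galpha_nn)
  have hx: "h x \<in> galpha k m" and hy: "h y \<in> galpha k m" using D(3) x y by auto
  have ezn: "ez l \<in> nn k m" using l by (intro g2alpha_nn ez_g2alpha)
  define c where "c = 2 * ninner k m x x"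
  have "h (nbr k m x y) = nscale c (h (ez l))"
    using nbr_sq[OF x l] hscale[OF D(1) ezn] by (simp add: y_def c_def)
  then have eq: "nscale c (h (ez l)) = nadd (nbr k m (h x) y) (nbr k m x (h y))"
    using D(5)[OF xn yn] by simp
  have "c * snd (h (ez l)) l = snd (nbr k m (h x) y) l + snd (nbr k m x (h y)) l"
    using arg_cong[OF eq, of "\<lambda>v. snd v l"] by simp
  also have "\<dots> = 2 * gA k m (fst (Rm k l (h x))) (fst y) + 2 * gA k m (fst (Rm k l x)) (fst (h y))"
    using l by (simp add: nbr_snd)
  also have "gA k m (fst (Rm k l (h x))) (fst y) = ninner k m (h x) x"
  proof -
    have "gA k m (fst (Rm k l (h x))) (fst y) = - gA k m (fst (h x)) (fst (Rm k l (Rm k l x)))"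
      using l by (simp add: y_def gA_skew)
    also have "\<dots> = gA k m (fst (h x)) (fst x)"
      using Rm_Rm[OF x l] by (simp add: gA_def sum_negf)
    also have "\<dots> = ninner k m (h x) x" using x by (simp add: ninner_galpha)
    finally show ?thesis .
  qed
  also have "gA k m (fst (Rm k l x)) (fst (h y)) = ninner k m (h y) y"
    using y by (simp add: ninner_galpha gA_sym y_def)
  finally have "c * snd (h (ez l)) l = 2 * ninner k m (h x) x + 2 * ninner k m (h y) y" .
  then show ?thesis by (simp add: c_def y_def algebra_simps)
qed

lemma Hzero:
  assumes hN: "h \<in> NN k m"
    and Cz: "\<And>l. 0 < l \<Longrightarrow> l < 2^k \<Longrightarrow> snd (h (ez l)) l = 0"
    and vol: "\<And>a j. j < 2^k \<Longrightarrow> rvf k ls a j = - a j"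
    and odd: "odd (length ls)" and lsr: "set ls \<subseteq> {0<..<2^k}"
    and x: "x \<in> galpha k m"
  shows "h x = nzero"
proof -
  note D = NN_D[OF hN]
  have Q0: "ninner k m (h x) x + ninner k m (h (Rm k l x)) (Rm k l x) = 0"
    if "x \<in> galpha k m" "0 < l" "l < 2^k" for x l
    using star[OF hN that] Cz[OF that(2,3)] by simp
  have B: "ninner k m (h x) y = ninner k m (Rm k l (h (Rm k l x))) y"
    if xg: "x \<in> galpha k m" and yg: "y \<in> galpha k m" and l: "0 < l" "l < 2^k" for x y l
  proof -
    have xn: "x \<in> nn k m" "y \<in> nn k m" using xg yg by (auto intro: galpha_nn)
    have pol: "ninner k m (h (nadd u v)) (nadd u v) =
        ninner k m (h u) u + 2 * ninner k m (h u) v + ninner k m (h v) v"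
      if "u \<in> galpha k m" "v \<in> galpha k m" for u v
    proof -
      have un: "u \<in> nn k m" "v \<in> nn k m" using that by (auto intro: galpha_nn)
      have "ninner k m (h v) u = ninner k m (h u) v"
        using hsa[OF D(2) un(2) un(1)] by (simp add: ninner_sym)
      then show ?thesis using hadd[OF D(1) un]
        by (simp add: ninner_add ninner_add2)
    qed
    have Rx: "Rm k l x \<in> galpha k m" "Rm k l y \<in> galpha k m" using xg yg by (auto intro: Rm_galpha)
    have s: "nadd x y \<in> galpha k m" using xg yg by (rule galpha_add)
    have e1: "ninner k m (h (nadd x y)) (nadd x y) + ninner k m (h (Rm k l (nadd x y))) (Rm k l (nadd x y)) = 0"
      using Q0[OF s l] .
    have e2: "ninner k m (h x) x + ninner k m (h (Rm k l x)) (Rm k l x) = 0" using Q0[OF xg l] .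
    have e3: "ninner k m (h y) y + ninner k m (h (Rm k l y)) (Rm k l y) = 0" using Q0[OF yg l] .
    have "ninner k m (h x) y + ninner k m (h (Rm k l x)) (Rm k l y) = 0"
      using e1 e2 e3 pol[OF xg yg] pol[OF Rx] by (simp add: Rm_add)
    moreover have "ninner k m (h (Rm k l x)) (Rm k l y) = - ninner k m (Rm k l (h (Rm k l x))) y"
    proof -
      have "ninner k m (h (Rm k l x)) (Rm k l y) = gA k m (fst (h (Rm k l x))) (fst (Rm k l y))"
        using Rx by (simp add: ninner_galpha)
      also have "\<dots> = - gA k m (fst (Rm k l (h (Rm k l x)))) (fst y)"
        using gA_skew[OF l, where v="fst (h (Rm k l x))" and w="fst y"] by simp
      also have "\<dots> = - ninner k m (Rm k l (h (Rm k l x))) y" using yg by (simp add: ninner_galpha)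
      finally show ?thesis .
    qed
    ultimately show ?thesis by simp
  qed
  have E: "h x = Rm k l (h (Rm k l x))" if xg: "x \<in> galpha k m" and l: "0 < l" "l < 2^k" for x l
  proof -
    have hx: "h x \<in> galpha k m" using D(3) xg by simp
    have hr: "Rm k l (h (Rm k l x)) \<in> galpha k m" using D(3) Rm_galpha xg by simp
    define w where "w = nadd (h x) (nscale (-1) (Rm k l (h (Rm k l x))))"
    have wg: "w \<in> galpha k m" using hx hr by (simp add: w_def galpha_add galpha_scale)
    have "ninner k m w w = 0"
      using B[OF xg wg l] by (simp add: w_def ninner_add ninner_scale)
    then have "w = nzero" using ninner_self_zero galpha_nn[OF wg] by blast
    then show ?thesis using hx hr by (simp add: w_def nvec_eq galpha_iff)
  qed
  have AC: "h (Rm k l x) = nscale (-1) (Rm k l (h x))" if xg: "x \<in> galpha k m" and l: "0 < l" "l < 2^k" for x l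
  proof -
    have "h (Rm k l x) = Rm k l (h (Rm k l (Rm k l x)))" using E[OF Rm_galpha[OF xg] l] .
    also have "\<dots> = Rm k l (h (nscale (-1) x))" using Rm_Rm[OF xg l] by simp
    also have "\<dots> = nscale (-1) (Rm k l (h x))" using hscale[OF D(1) galpha_nn[OF xg]] by (simp add: Rm_scale)
    finally show ?thesis .
  qed
  have V: "h (Rv k ls' x) = nscale ((-1)^length ls') (Rv k ls' (h x))"
    if "set ls' \<subseteq> {0<..<2^k}" "x \<in> galpha k m" for ls' x
    using that
  proof (induction ls' arbitrary: x)
    case Nil then show ?case by (simp add: nvec_eq)
  next
    case (Cons l ls')
    have l: "0 < l" "l < 2^k" using Cons.prems by auto
    have "h (Rv k (l # ls') x) = h (Rv k ls' (Rm k l x))" by simp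
    also have "\<dots> = nscale ((-1)^length ls') (Rv k ls' (h (Rm k l x)))"
      using Cons.IH Cons.prems Rm_galpha by auto
    also have "\<dots> = nscale ((-1)^length ls') (Rv k ls' (nscale (-1) (Rm k l (h x))))"
      using AC[OF Cons.prems(2) l] by simp
    also have "\<dots> = nscale ((-1)^length (l # ls')) (Rv k (l # ls') (h x))"
      by (simp add: Rv_scale nscale_nscale)
    finally show ?case .
  qed
  have Rvx: "Rv k ls y = nscale (-1) y" if "y \<in> galpha k m" for y
  proof -
    have ne: "ls \<noteq> []" using odd by auto
    have "rvf k ls (fst y i) j = - fst y i j" for i j
      using vol rvf_hi[OF ne] that by (cases "j < 2^k") (auto simp: galpha_iff)
    moreover have "snd (Rv k ls y) = (\<lambda>_. 0)" using Rv_galpha[OF that] by (simp add: galpha_iff)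
    ultimately show ?thesis using that by (simp add: nvec_eq fst_Rv galpha_iff)
  qed
  have "nscale (-1) (h x) = h (nscale (-1) x)" using hscale[OF D(1) galpha_nn[OF x]] by simp
  also have "\<dots> = h (Rv k ls x)" using Rvx[OF x] by simp
  also have "\<dots> = nscale (-1) (Rv k ls (h x))" using V[OF lsr x] odd by simp
  also have "\<dots> = h x" using Rvx[OF D(3)[OF x]] by (simp add: nscale_nscale nvec_eq)
  finally have "nscale (-1) (h x) = h x" .
  then show ?thesis by (simp add: nvec_eq)
qed


end

lemma gA_ea: "i < m \<Longrightarrow> a < 2^k \<Longrightarrow> gA k m v (fst (ea i a)) = v i a"
proof -
  assume im: "i < m" and ak: "a < 2^k"
  have inner: "(\<Sum>j<2^k. v i' j * (if i' = i \<and> j = a then 1 else 0)) = (if i' = i then v i a else 0)" for i'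
  proof (cases "i' = i")
    case True
    have "(\<Sum>j<2^k. v i' j * (if i' = i \<and> j = a then 1 else 0)) = (\<Sum>j<2^k. if j = a then v i j else 0)"
      using True by (intro sum.cong) auto
    also have "\<dots> = v i a" using ak by (simp add: sum.delta)
    finally show ?thesis using True by simp
  next
    case False then show ?thesis by simp
  qed
  have "gA k m v (fst (ea i a)) = (\<Sum>i'<m. if i' = i then v i a else 0)"
    by (simp add: gA_def inner)
  also have "\<dots> = v i a" using im by (simp add: sum.delta)
  finally show ?thesis .
qed

lemma ninner_ea: "i < m \<Longrightarrow> a < 2^k \<Longrightarrow> ninner k m x (ea i a) = fst x i a"
  using ea_galpha ninner_galpha gA_ea by metis

lemma Rm_ea: assumes "cd_mult k (unit a) (unit l) = (\<lambda>j. s * unit b j)"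
  shows "Rm k l (ea i a) = nscale s (ea i b)"
proof -
  have "fst (Rm k l (ea i a)) i' j = s * (if i' = i \<and> j = b then 1 else 0)" for i' j
  proof (cases "i' = i")
    case True
    have "fst (ea i a) i' = unit a" using True by (auto simp: unit_def)
    then show ?thesis using True assms by (simp add: unit_def)
  next
    case False
    have "fst (ea i a) i' = (\<lambda>_. 0)" using False by auto
    then show ?thesis using False by simp
  qed
  then show ?thesis by (simp add: nvec_eq)
qed

lemma zero_NN:
  assumes e: "nendo k m h" and z: "\<And>x. x \<in> nn k m \<Longrightarrow> h x = nzero"
  shows "h \<in> NN k m"
proof -
  have sa: "selfadj k m h" using z by (simp add: selfadj_def ninner_sym)
  have der: "h (nbr k m x y) = nadd (nbr k m (h x) y) (nbr k m x (h y))"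
    if "x \<in> nn k m" "y \<in> nn k m" for x y
  proof -
    have "h x = nzero" "h y = nzero" "h (nbr k m x y) = nzero"
      using z that g2alpha_nn[OF nbr_g2alpha] by auto
    then show ?thesis by simp
  qed
  have t1: "tr_alpha k m h = 0"
    unfolding tr_alpha_def by (intro sum.neutral ballI) (auto simp: z galpha_nn ea_galpha)
  have t2: "tr_2alpha k m h = 0"
    unfolding tr_2alpha_def by (intro sum.neutral ballI) (auto simp: z g2alpha_nn ez_g2alpha)
  show ?thesis using e sa der t1 t2 z galpha_nn g2alpha_nn by (simp add: NN_def)
qed

context cdk
begin

lemma rel:
  assumes hN: "h \<in> NN k m" and i: "i < m" and ab: "a < 2^k" "b < 2^k" and l: "0 < l" "l < 2^k"
    and p: "cd_mult k (unit a) (unit l) = (\<lambda>j. s * unit b j)" and s: "s * s = 1"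
  shows "snd (h (ez l)) l = fst (h (ea i a)) i a + fst (h (ea i b)) i b"
proof -
  note D = NN_D[OF hN]
  have ea: "ea i a \<in> galpha k m" "ea i b \<in> galpha k m" using i ab by (auto intro: ea_galpha)
  have "snd (h (ez l)) l * ninner k m (ea i a) (ea i a) =
      ninner k m (h (ea i a)) (ea i a) + ninner k m (h (Rm k l (ea i a))) (Rm k l (ea i a))"
    using star[OF hN ea(1) l] .
  moreover have "ninner k m (ea i a) (ea i a) = 1" using i ab by (simp add: ninner_ea)
  moreover have "ninner k m (h (ea i a)) (ea i a) = fst (h (ea i a)) i a" using i ab by (simp add: ninner_ea)
  moreover have "ninner k m (h (Rm k l (ea i a))) (Rm k l (ea i a)) = fst (h (ea i b)) i b"
  proof -
    have "h (Rm k l (ea i a)) = nscale s (h (ea i b))"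
      using Rm_ea[OF p] hscale[OF D(1) galpha_nn[OF ea(2)]] by simp
    then have "ninner k m (h (Rm k l (ea i a))) (Rm k l (ea i a)) = s * s * ninner k m (h (ea i b)) (ea i b)"
      using Rm_ea[OF p] by (simp add: ninner_scale ninner_scale2)
    then show ?thesis using s i ab by (simp add: ninner_ea)
  qed
  ultimately show ?thesis by simp
qed

lemma ez_zero:
  assumes hN: "h \<in> NN k m" and m: "0 < m" and H: "\<And>x. x \<in> galpha k m \<Longrightarrow> h x = nzero"
    and l: "0 < l" "l < 2^k"
  shows "h (ez l) = nzero"
proof -
  note D = NN_D[OF hN]
  have x: "ea 0 0 \<in> galpha k m" using m by (auto intro: ea_galpha)
  have y: "Rm k l (ea 0 0) \<in> galpha k m" using x by (rule Rm_galpha)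
  have n1: "ninner k m (ea 0 0) (ea 0 0) = 1" using m by (simp add: ninner_ea)
  have ezn: "ez l \<in> nn k m" using l by (intro g2alpha_nn ez_g2alpha)
  have "nscale 2 (h (ez l)) = h (nbr k m (ea 0 0) (Rm k l (ea 0 0)))"
    using nbr_sq[OF x l] n1 hscale[OF D(1) ezn] by simp
  also have "\<dots> = nzero"
    using D(5)[OF galpha_nn[OF x] galpha_nn[OF y]] H[OF x] H[OF y] by (simp add: nvec_eq)
  finally show ?thesis by (simp add: nvec_eq)
qed

lemma caseK:
  assumes e: "nendo k m h" and m: "0 < m"
    and Cz: "h \<in> NN k m \<Longrightarrow> (\<And>l. 0 < l \<Longrightarrow> l < 2^k \<Longrightarrow> snd (h (ez l)) l = 0)"
    and vol: "\<And>a j. j < 2^k \<Longrightarrow> rvf k ls a j = - a j"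
    and odd: "odd (length ls)" and lsr: "set ls \<subseteq> {0<..<2^k}"
  shows "h \<in> NN k m \<longleftrightarrow> (\<forall>x\<in>nn k m. h x = nzero)"
proof
  assume hN: "h \<in> NN k m"
  have H: "h x = nzero" if "x \<in> galpha k m" for x
    using Hzero[OF hN Cz[OF hN] vol odd lsr that] by blast
  have E: "h (ez l) = nzero" if "0 < l" "l < 2^k" for l
    using ez_zero[OF hN m H that] .
  show "\<forall>x\<in>nn k m. h x = nzero"
    using zero_on_nn[OF e H zero_on_g2alpha[OF e E]] by blast
next
  assume "\<forall>x\<in>nn k m. h x = nzero"
  then show "h \<in> NN k m" using zero_NN[OF e] by blast
qed

end


lemma m2_0: "cd_mult 2 a b 0 = a 0 * b 0 - a 1 * b 1 - a 2 * b 2 - a 3 * b 3"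
  by (simp add: cd_join_def cd_lo_def cd_hi_def numeral_eq_Suc algebra_simps)
lemma m2_1: "cd_mult 2 a b 1 = a 0 * b 1 + a 1 * b 0 + a 2 * b 3 - a 3 * b 2"
  by (simp add: cd_join_def cd_lo_def cd_hi_def numeral_eq_Suc algebra_simps)
lemma m2_2: "cd_mult 2 a b 2 = a 0 * b 2 - a 1 * b 3 + a 2 * b 0 + a 3 * b 1"
  by (simp add: cd_join_def cd_lo_def cd_hi_def numeral_eq_Suc algebra_simps)
lemma m2_3: "cd_mult 2 a b 3 = a 0 * b 3 + a 1 * b 2 - a 2 * b 1 + a 3 * b 0"
  by (simp add: cd_join_def cd_lo_def cd_hi_def numeral_eq_Suc algebra_simps)
lemma m2_1s: "cd_mult 2 a b (Suc 0) = a 0 * b 1 + a 1 * b 0 + a 2 * b 3 - a 3 * b 2"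
  using m2_1 by simp
lemma c2_0: "cd_conj 2 a 0 = a 0" by (simp add: cd_join_def cd_lo_def cd_hi_def numeral_eq_Suc)
lemma c2_1s: "cd_conj 2 a (Suc 0) = - a 1" by (simp add: cd_join_def cd_lo_def cd_hi_def numeral_eq_Suc)
lemma c2_1: "cd_conj 2 a 1 = - a 1" by (simp add: cd_join_def cd_lo_def cd_hi_def numeral_eq_Suc)
lemma c2_2: "cd_conj 2 a 2 = - a 2" by (simp add: cd_join_def cd_lo_def cd_hi_def numeral_eq_Suc)
lemma c2_3: "cd_conj 2 a 3 = - a 3" by (simp add: cd_join_def cd_lo_def cd_hi_def numeral_eq_Suc)
lemmas M2 = m2_0 m2_1 m2_2 m2_3 c2_0 c2_1 c2_2 c2_3 m2_1s c2_1s
lemma sum4: "(\<Sum>j<(4::nat). f j) = f 0 + f 1 + f 2 + f 3"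
  by (simp add: numeral_eq_Suc)
lemma sumI4: "sum f {Suc 0..<4} = f 1 + f 2 + f 3"
  by (simp add: numeral_eq_Suc atLeastLessThanSuc add_ac)
lemma less4: "(j::nat) < 4 \<longleftrightarrow> j = 0 \<or> j = 1 \<or> j = 2 \<or> j = 3"
  by auto
lemma hi4: "4 \<le> j \<Longrightarrow> cd_mult 2 a b j = 0"
  using cd_mult_hi0[of 2 j a b] by simp
lemma A1_2: "0 < l \<Longrightarrow> l < 2^2 \<Longrightarrow> cd_mult 2 (cd_conj 2 a) b l = (\<Sum>j<2^2. cd_mult 2 a (unit l) j * b j)"
  by (auto simp: less4 M2 sum4 unit_def algebra_simps)
lemma A2_2: "0 < l \<Longrightarrow> l < 2^2 \<Longrightarrow> (\<Sum>j<2^2. cd_mult 2 a (unit l) j * b j) = - (\<Sum>j<2^2. a j * cd_mult 2 b (unit l) j)"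
  by (auto simp: less4 M2 sum4 unit_def algebra_simps)
lemma A3_2: "0 < l \<Longrightarrow> l < 2^2 \<Longrightarrow> j < 2^2 \<Longrightarrow> cd_mult 2 (cd_mult 2 a (unit l)) (unit l) j = - a j"
  by (auto simp: less4 M2 sum4 unit_def algebra_simps)
lemma A4_2: "0 < l \<Longrightarrow> l < 2^2 \<Longrightarrow> 0 < l' \<Longrightarrow> l' < 2^2 \<Longrightarrow>
      cd_mult 2 (cd_conj 2 a) (cd_mult 2 a (unit l)) l' = (if l' = l then (\<Sum>j<2^2. a j * a j) else 0)"
  by (auto simp: less4 M2 sum4 unit_def algebra_simps)
lemma A5_2: "j < 2^2 \<Longrightarrow> cd_mult 2 (\<lambda>j. a j + b j) c j = cd_mult 2 a c j + cd_mult 2 b c j"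
  by (auto simp: less4 M2 sum4 unit_def algebra_simps)
lemma A6_2: "j < 2^2 \<Longrightarrow> cd_mult 2 (\<lambda>j. r * a j) c j = r * cd_mult 2 a c j"
  by (auto simp: less4 M2 sum4 unit_def algebra_simps)
interpretation c2: cdk 2
  by unfold_locales (fact A1_2 A2_2 A3_2 A4_2 A5_2 A6_2)+
lemma r2_1_0: "cd_mult 2 a (unit 1) 0 = - a 1" by (simp add: M2 unit_def)
lemma r2_1_0s: "cd_mult 2 a (unit (Suc 0)) 0 = - a 1" by (simp add: M2 unit_def)
lemma r2_1_1: "cd_mult 2 a (unit 1) (Suc 0) = a 0" by (simp add: M2 unit_def)
lemma r2_1_1s: "cd_mult 2 a (unit (Suc 0)) (Suc 0) = a 0" by (simp add: M2 unit_def)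
lemma r2_1_2: "cd_mult 2 a (unit 1) 2 = a 3" by (simp add: M2 unit_def)
lemma r2_1_2s: "cd_mult 2 a (unit (Suc 0)) 2 = a 3" by (simp add: M2 unit_def)
lemma r2_1_3: "cd_mult 2 a (unit 1) 3 = - a 2" by (simp add: M2 unit_def)
lemma r2_1_3s: "cd_mult 2 a (unit (Suc 0)) 3 = - a 2" by (simp add: M2 unit_def)
lemma r2_2_0: "cd_mult 2 a (unit 2) 0 = - a 2" by (simp add: M2 unit_def)
lemma r2_2_1: "cd_mult 2 a (unit 2) (Suc 0) = - a 3" by (simp add: M2 unit_def)
lemma r2_2_2: "cd_mult 2 a (unit 2) 2 = a 0" by (simp add: M2 unit_def)
lemma r2_2_3: "cd_mult 2 a (unit 2) 3 = a 1" by (simp add: M2 unit_def)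
lemma r2_3_0: "cd_mult 2 a (unit 3) 0 = - a 3" by (simp add: M2 unit_def)
lemma r2_3_1: "cd_mult 2 a (unit 3) (Suc 0) = a 2" by (simp add: M2 unit_def)
lemma r2_3_2: "cd_mult 2 a (unit 3) 2 = - a 1" by (simp add: M2 unit_def)
lemma r2_3_3: "cd_mult 2 a (unit 3) 3 = a 0" by (simp add: M2 unit_def)
lemmas R2 = r2_1_0 r2_1_0s r2_1_1 r2_1_1s r2_1_2 r2_1_2s r2_1_3 r2_1_3s r2_2_0 r2_2_1 r2_2_2 r2_2_3 r2_3_0 r2_3_1 r2_3_2 r2_3_3
lemma vol2: "j < 2^2 \<Longrightarrow> rvf 2 [1,2,3] a j = - a j"
  by (auto simp: less4 R2)
lemma ext4: "(\<And>j::nat. j < 4 \<Longrightarrow> f j = g j) \<Longrightarrow> (\<And>j. 4 \<le> j \<Longrightarrow> f j = g j) \<Longrightarrow> f = g"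
  by (rule ext) (meson not_le)
lemma p2_0_1: "cd_mult 2 (unit 0) (unit 1) = (\<lambda>j. 1 * unit 1 j)"
  by (rule ext4) (auto simp: less4 R2 unit_app hi4)
lemma p2_0_2: "cd_mult 2 (unit 0) (unit 2) = (\<lambda>j. 1 * unit 2 j)"
  by (rule ext4) (auto simp: less4 R2 unit_app hi4)
lemma p2_0_3: "cd_mult 2 (unit 0) (unit 3) = (\<lambda>j. 1 * unit 3 j)"
  by (rule ext4) (auto simp: less4 R2 unit_app hi4)
lemma p2_1_1: "cd_mult 2 (unit 1) (unit 1) = (\<lambda>j. (-1) * unit 0 j)"
  by (rule ext4) (auto simp: less4 R2 unit_app hi4)
lemma p2_1_2: "cd_mult 2 (unit 1) (unit 2) = (\<lambda>j. 1 * unit 3 j)"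
  by (rule ext4) (auto simp: less4 R2 unit_app hi4)
lemma p2_1_3: "cd_mult 2 (unit 1) (unit 3) = (\<lambda>j. (-1) * unit 2 j)"
  by (rule ext4) (auto simp: less4 R2 unit_app hi4)
lemma p2_2_1: "cd_mult 2 (unit 2) (unit 1) = (\<lambda>j. (-1) * unit 3 j)"
  by (rule ext4) (auto simp: less4 R2 unit_app hi4)
lemma p2_2_2: "cd_mult 2 (unit 2) (unit 2) = (\<lambda>j. (-1) * unit 0 j)"
  by (rule ext4) (auto simp: less4 R2 unit_app hi4)
lemma p2_2_3: "cd_mult 2 (unit 2) (unit 3) = (\<lambda>j. 1 * unit 1 j)"
  by (rule ext4) (auto simp: less4 R2 unit_app hi4)
lemma p2_3_1: "cd_mult 2 (unit 3) (unit 1) = (\<lambda>j. 1 * unit 2 j)"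
  by (rule ext4) (auto simp: less4 R2 unit_app hi4)
lemma p2_3_2: "cd_mult 2 (unit 3) (unit 2) = (\<lambda>j. (-1) * unit 1 j)"
  by (rule ext4) (auto simp: less4 R2 unit_app hi4)
lemma p2_3_3: "cd_mult 2 (unit 3) (unit 3) = (\<lambda>j. (-1) * unit 0 j)"
  by (rule ext4) (auto simp: less4 R2 unit_app hi4)
lemma Cz2: assumes hN: "h \<in> NN 2 m" and m: "0 < m" shows "0 < l \<Longrightarrow> l < 2^2 \<Longrightarrow> snd (h (ez l)) l = 0"
proof -
  have r_0_1: "snd (h (ez 1)) 1 = fst (h (ea i 0)) i 0 + fst (h (ea i 1)) i 1" if "i < m" for i
    by (rule c2.rel[OF hN that _ _ _ _ p2_0_1]) simp_all
  have r_0_2: "snd (h (ez 2)) 2 = fst (h (ea i 0)) i 0 + fst (h (ea i 2)) i 2" if "i < m" for i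
    by (rule c2.rel[OF hN that _ _ _ _ p2_0_2]) simp_all
  have r_0_3: "snd (h (ez 3)) 3 = fst (h (ea i 0)) i 0 + fst (h (ea i 3)) i 3" if "i < m" for i
    by (rule c2.rel[OF hN that _ _ _ _ p2_0_3]) simp_all
  have r_1_1: "snd (h (ez 1)) 1 = fst (h (ea i 1)) i 1 + fst (h (ea i 0)) i 0" if "i < m" for i
    by (rule c2.rel[OF hN that _ _ _ _ p2_1_1]) simp_all
  have r_1_2: "snd (h (ez 2)) 2 = fst (h (ea i 1)) i 1 + fst (h (ea i 3)) i 3" if "i < m" for i
    by (rule c2.rel[OF hN that _ _ _ _ p2_1_2]) simp_all
  have r_1_3: "snd (h (ez 3)) 3 = fst (h (ea i 1)) i 1 + fst (h (ea i 2)) i 2" if "i < m" for i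
    by (rule c2.rel[OF hN that _ _ _ _ p2_1_3]) simp_all
  have r_2_1: "snd (h (ez 1)) 1 = fst (h (ea i 2)) i 2 + fst (h (ea i 3)) i 3" if "i < m" for i
    by (rule c2.rel[OF hN that _ _ _ _ p2_2_1]) simp_all
  have r_2_2: "snd (h (ez 2)) 2 = fst (h (ea i 2)) i 2 + fst (h (ea i 0)) i 0" if "i < m" for i
    by (rule c2.rel[OF hN that _ _ _ _ p2_2_2]) simp_all
  have r_2_3: "snd (h (ez 3)) 3 = fst (h (ea i 2)) i 2 + fst (h (ea i 1)) i 1" if "i < m" for i
    by (rule c2.rel[OF hN that _ _ _ _ p2_2_3]) simp_all
  have r_3_1: "snd (h (ez 1)) 1 = fst (h (ea i 3)) i 3 + fst (h (ea i 2)) i 2" if "i < m" for i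
    by (rule c2.rel[OF hN that _ _ _ _ p2_3_1]) simp_all
  have r_3_2: "snd (h (ez 2)) 2 = fst (h (ea i 3)) i 3 + fst (h (ea i 1)) i 1" if "i < m" for i
    by (rule c2.rel[OF hN that _ _ _ _ p2_3_2]) simp_all
  have r_3_3: "snd (h (ez 3)) 3 = fst (h (ea i 3)) i 3 + fst (h (ea i 0)) i 0" if "i < m" for i
    by (rule c2.rel[OF hN that _ _ _ _ p2_3_3]) simp_all
  have S: "(\<Sum>j<2^2. fst (h (ea i j)) i j) = 2 * snd (h (ez 1)) 1" if "i < m" for i
  proof -
    have "(\<Sum>j<2^2. fst (h (ea i j)) i j) = fst (h (ea i 0)) i 0 + fst (h (ea i 1)) i 1 + fst (h (ea i 2)) i 2 + fst (h (ea i 3)) i 3" by (simp add: sum4)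
    then show ?thesis using r_0_1[OF that] r_0_2[OF that] r_0_3[OF that] r_1_1[OF that] r_1_2[OF that] r_1_3[OF that] r_2_1[OF that] r_2_2[OF that] r_2_3[OF that] r_3_1[OF that] r_3_2[OF that] r_3_3[OF that] by linarith
  qed
  have C: "snd (h (ez 2)) 2 = snd (h (ez 1)) 1" "snd (h (ez 3)) 3 = snd (h (ez 1)) 1"
    using r_0_1[OF m] r_0_2[OF m] r_0_3[OF m] r_1_1[OF m] r_1_2[OF m] r_1_3[OF m] r_2_1[OF m] r_2_2[OF m] r_2_3[OF m] r_3_1[OF m] r_3_2[OF m] r_3_3[OF m] by linarith+
  have T1: "tr_alpha 2 m h = real m * (2 * snd (h (ez 1)) 1)"
    unfolding tr_alpha_def using S by simp
  have T2: "tr_2alpha 2 m h = snd (h (ez 1)) 1 + snd (h (ez 2)) 2 + snd (h (ez 3)) 3" by (simp add: tr_2alpha_def sumI4)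
  have "(2 * real m + 6) * snd (h (ez 1)) 1 = 0" using NN_D(6)[OF hN] T1 T2 C by (simp add: algebra_simps)
  moreover have "2 * real m + 6 \<noteq> 0" by simp
  ultimately have "snd (h (ez 1)) 1 = 0" by simp
  then have all: "snd (h (ez 1)) 1 = 0 \<and> snd (h (ez 2)) 2 = 0 \<and> snd (h (ez 3)) 3 = 0" using C by simp
  show "0 < l \<Longrightarrow> l < 2^2 \<Longrightarrow> snd (h (ez l)) l = 0" using all by (auto simp: less4)
qed
lemma case2: "nendo 2 m h \<Longrightarrow> 0 < m \<Longrightarrow> (h \<in> NN 2 m \<longleftrightarrow> (\<forall>x\<in>nn 2 m. h x = nzero))"
  by (rule c2.caseK[OF _ _ Cz2 vol2]) auto

lemma m3_0: "cd_mult 3 a b 0 = a 0 * b 0 - a 1 * b 1 - a 2 * b 2 - a 3 * b 3 - a 4 * b 4 - a 5 * b 5 - a 6 * b 6 - a 7 * b 7"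
  by (simp add: cd_join_def cd_lo_def cd_hi_def numeral_eq_Suc algebra_simps)
lemma m3_1: "cd_mult 3 a b 1 = a 0 * b 1 + a 1 * b 0 + a 2 * b 3 - a 3 * b 2 + a 4 * b 5 - a 5 * b 4 - a 6 * b 7 + a 7 * b 6"
  by (simp add: cd_join_def cd_lo_def cd_hi_def numeral_eq_Suc algebra_simps)
lemma m3_2: "cd_mult 3 a b 2 = a 0 * b 2 - a 1 * b 3 + a 2 * b 0 + a 3 * b 1 + a 4 * b 6 + a 5 * b 7 - a 6 * b 4 - a 7 * b 5"
  by (simp add: cd_join_def cd_lo_def cd_hi_def numeral_eq_Suc algebra_simps)
lemma m3_3: "cd_mult 3 a b 3 = a 0 * b 3 + a 1 * b 2 - a 2 * b 1 + a 3 * b 0 + a 4 * b 7 - a 5 * b 6 + a 6 * b 5 - a 7 * b 4"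
  by (simp add: cd_join_def cd_lo_def cd_hi_def numeral_eq_Suc algebra_simps)
lemma m3_4: "cd_mult 3 a b 4 = a 0 * b 4 - a 1 * b 5 - a 2 * b 6 - a 3 * b 7 + a 4 * b 0 + a 5 * b 1 + a 6 * b 2 + a 7 * b 3"
  by (simp add: cd_join_def cd_lo_def cd_hi_def numeral_eq_Suc algebra_simps)
lemma m3_5: "cd_mult 3 a b 5 = a 0 * b 5 + a 1 * b 4 - a 2 * b 7 + a 3 * b 6 - a 4 * b 1 + a 5 * b 0 - a 6 * b 3 + a 7 * b 2"
  by (simp add: cd_join_def cd_lo_def cd_hi_def numeral_eq_Suc algebra_simps)
lemma m3_6: "cd_mult 3 a b 6 = a 0 * b 6 + a 1 * b 7 + a 2 * b 4 - a 3 * b 5 - a 4 * b 2 + a 5 * b 3 + a 6 * b 0 - a 7 * b 1"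
  by (simp add: cd_join_def cd_lo_def cd_hi_def numeral_eq_Suc algebra_simps)
lemma m3_7: "cd_mult 3 a b 7 = a 0 * b 7 - a 1 * b 6 + a 2 * b 5 + a 3 * b 4 - a 4 * b 3 - a 5 * b 2 + a 6 * b 1 + a 7 * b 0"
  by (simp add: cd_join_def cd_lo_def cd_hi_def numeral_eq_Suc algebra_simps)
lemma m3_1s: "cd_mult 3 a b (Suc 0) = a 0 * b 1 + a 1 * b 0 + a 2 * b 3 - a 3 * b 2 + a 4 * b 5 - a 5 * b 4 - a 6 * b 7 + a 7 * b 6"
  using m3_1 by simp
lemma c3_0: "cd_conj 3 a 0 = a 0" by (simp add: cd_join_def cd_lo_def cd_hi_def numeral_eq_Suc)
lemma c3_1s: "cd_conj 3 a (Suc 0) = - a 1" by (simp add: cd_join_def cd_lo_def cd_hi_def numeral_eq_Suc)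
lemma c3_1: "cd_conj 3 a 1 = - a 1" by (simp add: cd_join_def cd_lo_def cd_hi_def numeral_eq_Suc)
lemma c3_2: "cd_conj 3 a 2 = - a 2" by (simp add: cd_join_def cd_lo_def cd_hi_def numeral_eq_Suc)
lemma c3_3: "cd_conj 3 a 3 = - a 3" by (simp add: cd_join_def cd_lo_def cd_hi_def numeral_eq_Suc)
lemma c3_4: "cd_conj 3 a 4 = - a 4" by (simp add: cd_join_def cd_lo_def cd_hi_def numeral_eq_Suc)
lemma c3_5: "cd_conj 3 a 5 = - a 5" by (simp add: cd_join_def cd_lo_def cd_hi_def numeral_eq_Suc)
lemma c3_6: "cd_conj 3 a 6 = - a 6" by (simp add: cd_join_def cd_lo_def cd_hi_def numeral_eq_Suc)
lemma c3_7: "cd_conj 3 a 7 = - a 7" by (simp add: cd_join_def cd_lo_def cd_hi_def numeral_eq_Suc)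
lemmas M3 = m3_0 m3_1 m3_2 m3_3 m3_4 m3_5 m3_6 m3_7 c3_0 c3_1 c3_2 c3_3 c3_4 c3_5 c3_6 c3_7 m3_1s c3_1s
lemma sum8: "(\<Sum>j<(8::nat). f j) = f 0 + f 1 + f 2 + f 3 + f 4 + f 5 + f 6 + f 7"
  by (simp add: numeral_eq_Suc)
lemma sumI8: "sum f {Suc 0..<8} = f 1 + f 2 + f 3 + f 4 + f 5 + f 6 + f 7"
  by (simp add: numeral_eq_Suc atLeastLessThanSuc add_ac)
lemma less8: "(j::nat) < 8 \<longleftrightarrow> j = 0 \<or> j = 1 \<or> j = 2 \<or> j = 3 \<or> j = 4 \<or> j = 5 \<or> j = 6 \<or> j = 7"
  by auto
lemma hi8: "8 \<le> j \<Longrightarrow> cd_mult 3 a b j = 0"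
  using cd_mult_hi0[of 3 j a b] by simp
lemma A1_3: "0 < l \<Longrightarrow> l < 2^3 \<Longrightarrow> cd_mult 3 (cd_conj 3 a) b l = (\<Sum>j<2^3. cd_mult 3 a (unit l) j * b j)"
  by (auto simp: less8 M3 sum8 unit_def algebra_simps)
lemma A2_3: "0 < l \<Longrightarrow> l < 2^3 \<Longrightarrow> (\<Sum>j<2^3. cd_mult 3 a (unit l) j * b j) = - (\<Sum>j<2^3. a j * cd_mult 3 b (unit l) j)"
  by (auto simp: less8 M3 sum8 unit_def algebra_simps)
lemma A3_3: "0 < l \<Longrightarrow> l < 2^3 \<Longrightarrow> j < 2^3 \<Longrightarrow> cd_mult 3 (cd_mult 3 a (unit l)) (unit l) j = - a j"
  by (auto simp: less8 M3 sum8 unit_def algebra_simps)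
lemma A4_3: "0 < l \<Longrightarrow> l < 2^3 \<Longrightarrow> 0 < l' \<Longrightarrow> l' < 2^3 \<Longrightarrow>
      cd_mult 3 (cd_conj 3 a) (cd_mult 3 a (unit l)) l' = (if l' = l then (\<Sum>j<2^3. a j * a j) else 0)"
  by (auto simp: less8 M3 sum8 unit_def algebra_simps)
lemma A5_3: "j < 2^3 \<Longrightarrow> cd_mult 3 (\<lambda>j. a j + b j) c j = cd_mult 3 a c j + cd_mult 3 b c j"
  by (auto simp: less8 M3 sum8 unit_def algebra_simps)
lemma A6_3: "j < 2^3 \<Longrightarrow> cd_mult 3 (\<lambda>j. r * a j) c j = r * cd_mult 3 a c j"
  by (auto simp: less8 M3 sum8 unit_def algebra_simps)
interpretation c3: cdk 3
  by unfold_locales (fact A1_3 A2_3 A3_3 A4_3 A5_3 A6_3)+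
lemma r3_1_0: "cd_mult 3 a (unit 1) 0 = - a 1" by (simp add: M3 unit_def)
lemma r3_1_0s: "cd_mult 3 a (unit (Suc 0)) 0 = - a 1" by (simp add: M3 unit_def)
lemma r3_1_1: "cd_mult 3 a (unit 1) (Suc 0) = a 0" by (simp add: M3 unit_def)
lemma r3_1_1s: "cd_mult 3 a (unit (Suc 0)) (Suc 0) = a 0" by (simp add: M3 unit_def)
lemma r3_1_2: "cd_mult 3 a (unit 1) 2 = a 3" by (simp add: M3 unit_def)
lemma r3_1_2s: "cd_mult 3 a (unit (Suc 0)) 2 = a 3" by (simp add: M3 unit_def)
lemma r3_1_3: "cd_mult 3 a (unit 1) 3 = - a 2" by (simp add: M3 unit_def)
lemma r3_1_3s: "cd_mult 3 a (unit (Suc 0)) 3 = - a 2" by (simp add: M3 unit_def)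
lemma r3_1_4: "cd_mult 3 a (unit 1) 4 = a 5" by (simp add: M3 unit_def)
lemma r3_1_4s: "cd_mult 3 a (unit (Suc 0)) 4 = a 5" by (simp add: M3 unit_def)
lemma r3_1_5: "cd_mult 3 a (unit 1) 5 = - a 4" by (simp add: M3 unit_def)
lemma r3_1_5s: "cd_mult 3 a (unit (Suc 0)) 5 = - a 4" by (simp add: M3 unit_def)
lemma r3_1_6: "cd_mult 3 a (unit 1) 6 = - a 7" by (simp add: M3 unit_def)
lemma r3_1_6s: "cd_mult 3 a (unit (Suc 0)) 6 = - a 7" by (simp add: M3 unit_def)
lemma r3_1_7: "cd_mult 3 a (unit 1) 7 = a 6" by (simp add: M3 unit_def)
lemma r3_1_7s: "cd_mult 3 a (unit (Suc 0)) 7 = a 6" by (simp add: M3 unit_def)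
lemma r3_2_0: "cd_mult 3 a (unit 2) 0 = - a 2" by (simp add: M3 unit_def)
lemma r3_2_1: "cd_mult 3 a (unit 2) (Suc 0) = - a 3" by (simp add: M3 unit_def)
lemma r3_2_2: "cd_mult 3 a (unit 2) 2 = a 0" by (simp add: M3 unit_def)
lemma r3_2_3: "cd_mult 3 a (unit 2) 3 = a 1" by (simp add: M3 unit_def)
lemma r3_2_4: "cd_mult 3 a (unit 2) 4 = a 6" by (simp add: M3 unit_def)
lemma r3_2_5: "cd_mult 3 a (unit 2) 5 = a 7" by (simp add: M3 unit_def)
lemma r3_2_6: "cd_mult 3 a (unit 2) 6 = - a 4" by (simp add: M3 unit_def)
lemma r3_2_7: "cd_mult 3 a (unit 2) 7 = - a 5" by (simp add: M3 unit_def)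
lemma r3_3_0: "cd_mult 3 a (unit 3) 0 = - a 3" by (simp add: M3 unit_def)
lemma r3_3_1: "cd_mult 3 a (unit 3) (Suc 0) = a 2" by (simp add: M3 unit_def)
lemma r3_3_2: "cd_mult 3 a (unit 3) 2 = - a 1" by (simp add: M3 unit_def)
lemma r3_3_3: "cd_mult 3 a (unit 3) 3 = a 0" by (simp add: M3 unit_def)
lemma r3_3_4: "cd_mult 3 a (unit 3) 4 = a 7" by (simp add: M3 unit_def)
lemma r3_3_5: "cd_mult 3 a (unit 3) 5 = - a 6" by (simp add: M3 unit_def)
lemma r3_3_6: "cd_mult 3 a (unit 3) 6 = a 5" by (simp add: M3 unit_def)
lemma r3_3_7: "cd_mult 3 a (unit 3) 7 = - a 4" by (simp add: M3 unit_def)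
lemma r3_4_0: "cd_mult 3 a (unit 4) 0 = - a 4" by (simp add: M3 unit_def)
lemma r3_4_1: "cd_mult 3 a (unit 4) (Suc 0) = - a 5" by (simp add: M3 unit_def)
lemma r3_4_2: "cd_mult 3 a (unit 4) 2 = - a 6" by (simp add: M3 unit_def)
lemma r3_4_3: "cd_mult 3 a (unit 4) 3 = - a 7" by (simp add: M3 unit_def)
lemma r3_4_4: "cd_mult 3 a (unit 4) 4 = a 0" by (simp add: M3 unit_def)
lemma r3_4_5: "cd_mult 3 a (unit 4) 5 = a 1" by (simp add: M3 unit_def)
lemma r3_4_6: "cd_mult 3 a (unit 4) 6 = a 2" by (simp add: M3 unit_def)
lemma r3_4_7: "cd_mult 3 a (unit 4) 7 = a 3" by (simp add: M3 unit_def)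
lemma r3_5_0: "cd_mult 3 a (unit 5) 0 = - a 5" by (simp add: M3 unit_def)
lemma r3_5_1: "cd_mult 3 a (unit 5) (Suc 0) = a 4" by (simp add: M3 unit_def)
lemma r3_5_2: "cd_mult 3 a (unit 5) 2 = - a 7" by (simp add: M3 unit_def)
lemma r3_5_3: "cd_mult 3 a (unit 5) 3 = a 6" by (simp add: M3 unit_def)
lemma r3_5_4: "cd_mult 3 a (unit 5) 4 = - a 1" by (simp add: M3 unit_def)
lemma r3_5_5: "cd_mult 3 a (unit 5) 5 = a 0" by (simp add: M3 unit_def)
lemma r3_5_6: "cd_mult 3 a (unit 5) 6 = - a 3" by (simp add: M3 unit_def)
lemma r3_5_7: "cd_mult 3 a (unit 5) 7 = a 2" by (simp add: M3 unit_def)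
lemma r3_6_0: "cd_mult 3 a (unit 6) 0 = - a 6" by (simp add: M3 unit_def)
lemma r3_6_1: "cd_mult 3 a (unit 6) (Suc 0) = a 7" by (simp add: M3 unit_def)
lemma r3_6_2: "cd_mult 3 a (unit 6) 2 = a 4" by (simp add: M3 unit_def)
lemma r3_6_3: "cd_mult 3 a (unit 6) 3 = - a 5" by (simp add: M3 unit_def)
lemma r3_6_4: "cd_mult 3 a (unit 6) 4 = - a 2" by (simp add: M3 unit_def)
lemma r3_6_5: "cd_mult 3 a (unit 6) 5 = a 3" by (simp add: M3 unit_def)
lemma r3_6_6: "cd_mult 3 a (unit 6) 6 = a 0" by (simp add: M3 unit_def)
lemma r3_6_7: "cd_mult 3 a (unit 6) 7 = - a 1" by (simp add: M3 unit_def)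
lemma r3_7_0: "cd_mult 3 a (unit 7) 0 = - a 7" by (simp add: M3 unit_def)
lemma r3_7_1: "cd_mult 3 a (unit 7) (Suc 0) = - a 6" by (simp add: M3 unit_def)
lemma r3_7_2: "cd_mult 3 a (unit 7) 2 = a 5" by (simp add: M3 unit_def)
lemma r3_7_3: "cd_mult 3 a (unit 7) 3 = a 4" by (simp add: M3 unit_def)
lemma r3_7_4: "cd_mult 3 a (unit 7) 4 = - a 3" by (simp add: M3 unit_def)
lemma r3_7_5: "cd_mult 3 a (unit 7) 5 = - a 2" by (simp add: M3 unit_def)
lemma r3_7_6: "cd_mult 3 a (unit 7) 6 = a 1" by (simp add: M3 unit_def)
lemma r3_7_7: "cd_mult 3 a (unit 7) 7 = a 0" by (simp add: M3 unit_def)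
lemmas R3 = r3_1_0 r3_1_0s r3_1_1 r3_1_1s r3_1_2 r3_1_2s r3_1_3 r3_1_3s r3_1_4 r3_1_4s r3_1_5 r3_1_5s r3_1_6 r3_1_6s r3_1_7 r3_1_7s r3_2_0 r3_2_1 r3_2_2 r3_2_3 r3_2_4 r3_2_5 r3_2_6 r3_2_7 r3_3_0 r3_3_1 r3_3_2 r3_3_3 r3_3_4 r3_3_5 r3_3_6 r3_3_7 r3_4_0 r3_4_1 r3_4_2 r3_4_3 r3_4_4 r3_4_5 r3_4_6 r3_4_7 r3_5_0 r3_5_1 r3_5_2 r3_5_3 r3_5_4 r3_5_5 r3_5_6 r3_5_7 r3_6_0 r3_6_1 r3_6_2 r3_6_3 r3_6_4 r3_6_5 r3_6_6 r3_6_7 r3_7_0 r3_7_1 r3_7_2 r3_7_3 r3_7_4 r3_7_5 r3_7_6 r3_7_7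
lemma vol3: "j < 2^3 \<Longrightarrow> rvf 3 [1,2,3,4,5,6,7] a j = - a j"
  by (auto simp: less8 R3)
lemma ext8: "(\<And>j::nat. j < 8 \<Longrightarrow> f j = g j) \<Longrightarrow> (\<And>j. 8 \<le> j \<Longrightarrow> f j = g j) \<Longrightarrow> f = g"
  by (rule ext) (meson not_le)
lemma p3_0_1: "cd_mult 3 (unit 0) (unit 1) = (\<lambda>j. 1 * unit 1 j)"
  by (rule ext8) (auto simp: less8 R3 unit_app hi8)
lemma p3_0_2: "cd_mult 3 (unit 0) (unit 2) = (\<lambda>j. 1 * unit 2 j)"
  by (rule ext8) (auto simp: less8 R3 unit_app hi8)
lemma p3_0_3: "cd_mult 3 (unit 0) (unit 3) = (\<lambda>j. 1 * unit 3 j)"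
  by (rule ext8) (auto simp: less8 R3 unit_app hi8)
lemma p3_0_4: "cd_mult 3 (unit 0) (unit 4) = (\<lambda>j. 1 * unit 4 j)"
  by (rule ext8) (auto simp: less8 R3 unit_app hi8)
lemma p3_0_5: "cd_mult 3 (unit 0) (unit 5) = (\<lambda>j. 1 * unit 5 j)"
  by (rule ext8) (auto simp: less8 R3 unit_app hi8)
lemma p3_0_6: "cd_mult 3 (unit 0) (unit 6) = (\<lambda>j. 1 * unit 6 j)"
  by (rule ext8) (auto simp: less8 R3 unit_app hi8)
lemma p3_0_7: "cd_mult 3 (unit 0) (unit 7) = (\<lambda>j. 1 * unit 7 j)"
  by (rule ext8) (auto simp: less8 R3 unit_app hi8)
lemma p3_1_1: "cd_mult 3 (unit 1) (unit 1) = (\<lambda>j. (-1) * unit 0 j)"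
  by (rule ext8) (auto simp: less8 R3 unit_app hi8)
lemma p3_1_2: "cd_mult 3 (unit 1) (unit 2) = (\<lambda>j. 1 * unit 3 j)"
  by (rule ext8) (auto simp: less8 R3 unit_app hi8)
lemma p3_1_3: "cd_mult 3 (unit 1) (unit 3) = (\<lambda>j. (-1) * unit 2 j)"
  by (rule ext8) (auto simp: less8 R3 unit_app hi8)
lemma p3_1_4: "cd_mult 3 (unit 1) (unit 4) = (\<lambda>j. 1 * unit 5 j)"
  by (rule ext8) (auto simp: less8 R3 unit_app hi8)
lemma p3_1_5: "cd_mult 3 (unit 1) (unit 5) = (\<lambda>j. (-1) * unit 4 j)"
  by (rule ext8) (auto simp: less8 R3 unit_app hi8)
lemma p3_1_6: "cd_mult 3 (unit 1) (unit 6) = (\<lambda>j. (-1) * unit 7 j)"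
  by (rule ext8) (auto simp: less8 R3 unit_app hi8)
lemma p3_1_7: "cd_mult 3 (unit 1) (unit 7) = (\<lambda>j. 1 * unit 6 j)"
  by (rule ext8) (auto simp: less8 R3 unit_app hi8)
lemma p3_2_1: "cd_mult 3 (unit 2) (unit 1) = (\<lambda>j. (-1) * unit 3 j)"
  by (rule ext8) (auto simp: less8 R3 unit_app hi8)
lemma p3_2_2: "cd_mult 3 (unit 2) (unit 2) = (\<lambda>j. (-1) * unit 0 j)"
  by (rule ext8) (auto simp: less8 R3 unit_app hi8)
lemma p3_2_3: "cd_mult 3 (unit 2) (unit 3) = (\<lambda>j. 1 * unit 1 j)"
  by (rule ext8) (auto simp: less8 R3 unit_app hi8)
lemma p3_2_4: "cd_mult 3 (unit 2) (unit 4) = (\<lambda>j. 1 * unit 6 j)"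
  by (rule ext8) (auto simp: less8 R3 unit_app hi8)
lemma p3_2_5: "cd_mult 3 (unit 2) (unit 5) = (\<lambda>j. 1 * unit 7 j)"
  by (rule ext8) (auto simp: less8 R3 unit_app hi8)
lemma p3_2_6: "cd_mult 3 (unit 2) (unit 6) = (\<lambda>j. (-1) * unit 4 j)"
  by (rule ext8) (auto simp: less8 R3 unit_app hi8)
lemma p3_2_7: "cd_mult 3 (unit 2) (unit 7) = (\<lambda>j. (-1) * unit 5 j)"
  by (rule ext8) (auto simp: less8 R3 unit_app hi8)
lemma p3_3_1: "cd_mult 3 (unit 3) (unit 1) = (\<lambda>j. 1 * unit 2 j)"
  by (rule ext8) (auto simp: less8 R3 unit_app hi8)
lemma p3_3_2: "cd_mult 3 (unit 3) (unit 2) = (\<lambda>j. (-1) * unit 1 j)"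
  by (rule ext8) (auto simp: less8 R3 unit_app hi8)
lemma p3_3_3: "cd_mult 3 (unit 3) (unit 3) = (\<lambda>j. (-1) * unit 0 j)"
  by (rule ext8) (auto simp: less8 R3 unit_app hi8)
lemma p3_3_4: "cd_mult 3 (unit 3) (unit 4) = (\<lambda>j. 1 * unit 7 j)"
  by (rule ext8) (auto simp: less8 R3 unit_app hi8)
lemma p3_3_5: "cd_mult 3 (unit 3) (unit 5) = (\<lambda>j. (-1) * unit 6 j)"
  by (rule ext8) (auto simp: less8 R3 unit_app hi8)
lemma p3_3_6: "cd_mult 3 (unit 3) (unit 6) = (\<lambda>j. 1 * unit 5 j)"
  by (rule ext8) (auto simp: less8 R3 unit_app hi8)
lemma p3_3_7: "cd_mult 3 (unit 3) (unit 7) = (\<lambda>j. (-1) * unit 4 j)"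
  by (rule ext8) (auto simp: less8 R3 unit_app hi8)
lemma p3_4_1: "cd_mult 3 (unit 4) (unit 1) = (\<lambda>j. (-1) * unit 5 j)"
  by (rule ext8) (auto simp: less8 R3 unit_app hi8)
lemma p3_4_2: "cd_mult 3 (unit 4) (unit 2) = (\<lambda>j. (-1) * unit 6 j)"
  by (rule ext8) (auto simp: less8 R3 unit_app hi8)
lemma p3_4_3: "cd_mult 3 (unit 4) (unit 3) = (\<lambda>j. (-1) * unit 7 j)"
  by (rule ext8) (auto simp: less8 R3 unit_app hi8)
lemma p3_4_4: "cd_mult 3 (unit 4) (unit 4) = (\<lambda>j. (-1) * unit 0 j)"
  by (rule ext8) (auto simp: less8 R3 unit_app hi8)
lemma p3_4_5: "cd_mult 3 (unit 4) (unit 5) = (\<lambda>j. 1 * unit 1 j)"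
  by (rule ext8) (auto simp: less8 R3 unit_app hi8)
lemma p3_4_6: "cd_mult 3 (unit 4) (unit 6) = (\<lambda>j. 1 * unit 2 j)"
  by (rule ext8) (auto simp: less8 R3 unit_app hi8)
lemma p3_4_7: "cd_mult 3 (unit 4) (unit 7) = (\<lambda>j. 1 * unit 3 j)"
  by (rule ext8) (auto simp: less8 R3 unit_app hi8)
lemma p3_5_1: "cd_mult 3 (unit 5) (unit 1) = (\<lambda>j. 1 * unit 4 j)"
  by (rule ext8) (auto simp: less8 R3 unit_app hi8)
lemma p3_5_2: "cd_mult 3 (unit 5) (unit 2) = (\<lambda>j. (-1) * unit 7 j)"
  by (rule ext8) (auto simp: less8 R3 unit_app hi8)
lemma p3_5_3: "cd_mult 3 (unit 5) (unit 3) = (\<lambda>j. 1 * unit 6 j)"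
  by (rule ext8) (auto simp: less8 R3 unit_app hi8)
lemma p3_5_4: "cd_mult 3 (unit 5) (unit 4) = (\<lambda>j. (-1) * unit 1 j)"
  by (rule ext8) (auto simp: less8 R3 unit_app hi8)
lemma p3_5_5: "cd_mult 3 (unit 5) (unit 5) = (\<lambda>j. (-1) * unit 0 j)"
  by (rule ext8) (auto simp: less8 R3 unit_app hi8)
lemma p3_5_6: "cd_mult 3 (unit 5) (unit 6) = (\<lambda>j. (-1) * unit 3 j)"
  by (rule ext8) (auto simp: less8 R3 unit_app hi8)
lemma p3_5_7: "cd_mult 3 (unit 5) (unit 7) = (\<lambda>j. 1 * unit 2 j)"
  by (rule ext8) (auto simp: less8 R3 unit_app hi8)
lemma p3_6_1: "cd_mult 3 (unit 6) (unit 1) = (\<lambda>j. 1 * unit 7 j)"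
  by (rule ext8) (auto simp: less8 R3 unit_app hi8)
lemma p3_6_2: "cd_mult 3 (unit 6) (unit 2) = (\<lambda>j. 1 * unit 4 j)"
  by (rule ext8) (auto simp: less8 R3 unit_app hi8)
lemma p3_6_3: "cd_mult 3 (unit 6) (unit 3) = (\<lambda>j. (-1) * unit 5 j)"
  by (rule ext8) (auto simp: less8 R3 unit_app hi8)
lemma p3_6_4: "cd_mult 3 (unit 6) (unit 4) = (\<lambda>j. (-1) * unit 2 j)"
  by (rule ext8) (auto simp: less8 R3 unit_app hi8)
lemma p3_6_5: "cd_mult 3 (unit 6) (unit 5) = (\<lambda>j. 1 * unit 3 j)"
  by (rule ext8) (auto simp: less8 R3 unit_app hi8)
lemma p3_6_6: "cd_mult 3 (unit 6) (unit 6) = (\<lambda>j. (-1) * unit 0 j)"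
  by (rule ext8) (auto simp: less8 R3 unit_app hi8)
lemma p3_6_7: "cd_mult 3 (unit 6) (unit 7) = (\<lambda>j. (-1) * unit 1 j)"
  by (rule ext8) (auto simp: less8 R3 unit_app hi8)
lemma p3_7_1: "cd_mult 3 (unit 7) (unit 1) = (\<lambda>j. (-1) * unit 6 j)"
  by (rule ext8) (auto simp: less8 R3 unit_app hi8)
lemma p3_7_2: "cd_mult 3 (unit 7) (unit 2) = (\<lambda>j. 1 * unit 5 j)"
  by (rule ext8) (auto simp: less8 R3 unit_app hi8)
lemma p3_7_3: "cd_mult 3 (unit 7) (unit 3) = (\<lambda>j. 1 * unit 4 j)"
  by (rule ext8) (auto simp: less8 R3 unit_app hi8)
lemma p3_7_4: "cd_mult 3 (unit 7) (unit 4) = (\<lambda>j. (-1) * unit 3 j)"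
  by (rule ext8) (auto simp: less8 R3 unit_app hi8)
lemma p3_7_5: "cd_mult 3 (unit 7) (unit 5) = (\<lambda>j. (-1) * unit 2 j)"
  by (rule ext8) (auto simp: less8 R3 unit_app hi8)
lemma p3_7_6: "cd_mult 3 (unit 7) (unit 6) = (\<lambda>j. 1 * unit 1 j)"
  by (rule ext8) (auto simp: less8 R3 unit_app hi8)
lemma p3_7_7: "cd_mult 3 (unit 7) (unit 7) = (\<lambda>j. (-1) * unit 0 j)"
  by (rule ext8) (auto simp: less8 R3 unit_app hi8)
lemma Cz3: assumes hN: "h \<in> NN 3 1" shows "0 < l \<Longrightarrow> l < 2^3 \<Longrightarrow> snd (h (ez l)) l = 0"
proof -
  have r_0_1: "snd (h (ez 1)) 1 = fst (h (ea 0 0)) 0 0 + fst (h (ea 0 1)) 0 1"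
    by (rule c3.rel[OF hN _ _ _ _ _ p3_0_1]) simp_all
  have r_0_2: "snd (h (ez 2)) 2 = fst (h (ea 0 0)) 0 0 + fst (h (ea 0 2)) 0 2"
    by (rule c3.rel[OF hN _ _ _ _ _ p3_0_2]) simp_all
  have r_0_3: "snd (h (ez 3)) 3 = fst (h (ea 0 0)) 0 0 + fst (h (ea 0 3)) 0 3"
    by (rule c3.rel[OF hN _ _ _ _ _ p3_0_3]) simp_all
  have r_0_4: "snd (h (ez 4)) 4 = fst (h (ea 0 0)) 0 0 + fst (h (ea 0 4)) 0 4"
    by (rule c3.rel[OF hN _ _ _ _ _ p3_0_4]) simp_all
  have r_0_5: "snd (h (ez 5)) 5 = fst (h (ea 0 0)) 0 0 + fst (h (ea 0 5)) 0 5"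
    by (rule c3.rel[OF hN _ _ _ _ _ p3_0_5]) simp_all
  have r_0_6: "snd (h (ez 6)) 6 = fst (h (ea 0 0)) 0 0 + fst (h (ea 0 6)) 0 6"
    by (rule c3.rel[OF hN _ _ _ _ _ p3_0_6]) simp_all
  have r_0_7: "snd (h (ez 7)) 7 = fst (h (ea 0 0)) 0 0 + fst (h (ea 0 7)) 0 7"
    by (rule c3.rel[OF hN _ _ _ _ _ p3_0_7]) simp_all
  have r_1_1: "snd (h (ez 1)) 1 = fst (h (ea 0 1)) 0 1 + fst (h (ea 0 0)) 0 0"
    by (rule c3.rel[OF hN _ _ _ _ _ p3_1_1]) simp_all
  have r_1_2: "snd (h (ez 2)) 2 = fst (h (ea 0 1)) 0 1 + fst (h (ea 0 3)) 0 3"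
    by (rule c3.rel[OF hN _ _ _ _ _ p3_1_2]) simp_all
  have r_1_3: "snd (h (ez 3)) 3 = fst (h (ea 0 1)) 0 1 + fst (h (ea 0 2)) 0 2"
    by (rule c3.rel[OF hN _ _ _ _ _ p3_1_3]) simp_all
  have r_1_4: "snd (h (ez 4)) 4 = fst (h (ea 0 1)) 0 1 + fst (h (ea 0 5)) 0 5"
    by (rule c3.rel[OF hN _ _ _ _ _ p3_1_4]) simp_all
  have r_1_5: "snd (h (ez 5)) 5 = fst (h (ea 0 1)) 0 1 + fst (h (ea 0 4)) 0 4"
    by (rule c3.rel[OF hN _ _ _ _ _ p3_1_5]) simp_all
  have r_1_6: "snd (h (ez 6)) 6 = fst (h (ea 0 1)) 0 1 + fst (h (ea 0 7)) 0 7"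
    by (rule c3.rel[OF hN _ _ _ _ _ p3_1_6]) simp_all
  have r_1_7: "snd (h (ez 7)) 7 = fst (h (ea 0 1)) 0 1 + fst (h (ea 0 6)) 0 6"
    by (rule c3.rel[OF hN _ _ _ _ _ p3_1_7]) simp_all
  have r_2_1: "snd (h (ez 1)) 1 = fst (h (ea 0 2)) 0 2 + fst (h (ea 0 3)) 0 3"
    by (rule c3.rel[OF hN _ _ _ _ _ p3_2_1]) simp_all
  have r_2_2: "snd (h (ez 2)) 2 = fst (h (ea 0 2)) 0 2 + fst (h (ea 0 0)) 0 0"
    by (rule c3.rel[OF hN _ _ _ _ _ p3_2_2]) simp_all
  have r_2_3: "snd (h (ez 3)) 3 = fst (h (ea 0 2)) 0 2 + fst (h (ea 0 1)) 0 1"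
    by (rule c3.rel[OF hN _ _ _ _ _ p3_2_3]) simp_all
  have r_2_4: "snd (h (ez 4)) 4 = fst (h (ea 0 2)) 0 2 + fst (h (ea 0 6)) 0 6"
    by (rule c3.rel[OF hN _ _ _ _ _ p3_2_4]) simp_all
  have r_2_5: "snd (h (ez 5)) 5 = fst (h (ea 0 2)) 0 2 + fst (h (ea 0 7)) 0 7"
    by (rule c3.rel[OF hN _ _ _ _ _ p3_2_5]) simp_all
  have r_2_6: "snd (h (ez 6)) 6 = fst (h (ea 0 2)) 0 2 + fst (h (ea 0 4)) 0 4"
    by (rule c3.rel[OF hN _ _ _ _ _ p3_2_6]) simp_all
  have r_2_7: "snd (h (ez 7)) 7 = fst (h (ea 0 2)) 0 2 + fst (h (ea 0 5)) 0 5"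
    by (rule c3.rel[OF hN _ _ _ _ _ p3_2_7]) simp_all
  have r_3_1: "snd (h (ez 1)) 1 = fst (h (ea 0 3)) 0 3 + fst (h (ea 0 2)) 0 2"
    by (rule c3.rel[OF hN _ _ _ _ _ p3_3_1]) simp_all
  have r_3_2: "snd (h (ez 2)) 2 = fst (h (ea 0 3)) 0 3 + fst (h (ea 0 1)) 0 1"
    by (rule c3.rel[OF hN _ _ _ _ _ p3_3_2]) simp_all
  have r_3_3: "snd (h (ez 3)) 3 = fst (h (ea 0 3)) 0 3 + fst (h (ea 0 0)) 0 0"
    by (rule c3.rel[OF hN _ _ _ _ _ p3_3_3]) simp_all
  have r_3_4: "snd (h (ez 4)) 4 = fst (h (ea 0 3)) 0 3 + fst (h (ea 0 7)) 0 7"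
    by (rule c3.rel[OF hN _ _ _ _ _ p3_3_4]) simp_all
  have r_3_5: "snd (h (ez 5)) 5 = fst (h (ea 0 3)) 0 3 + fst (h (ea 0 6)) 0 6"
    by (rule c3.rel[OF hN _ _ _ _ _ p3_3_5]) simp_all
  have r_3_6: "snd (h (ez 6)) 6 = fst (h (ea 0 3)) 0 3 + fst (h (ea 0 5)) 0 5"
    by (rule c3.rel[OF hN _ _ _ _ _ p3_3_6]) simp_all
  have r_3_7: "snd (h (ez 7)) 7 = fst (h (ea 0 3)) 0 3 + fst (h (ea 0 4)) 0 4"
    by (rule c3.rel[OF hN _ _ _ _ _ p3_3_7]) simp_all
  have r_4_1: "snd (h (ez 1)) 1 = fst (h (ea 0 4)) 0 4 + fst (h (ea 0 5)) 0 5"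
    by (rule c3.rel[OF hN _ _ _ _ _ p3_4_1]) simp_all
  have r_4_2: "snd (h (ez 2)) 2 = fst (h (ea 0 4)) 0 4 + fst (h (ea 0 6)) 0 6"
    by (rule c3.rel[OF hN _ _ _ _ _ p3_4_2]) simp_all
  have r_4_3: "snd (h (ez 3)) 3 = fst (h (ea 0 4)) 0 4 + fst (h (ea 0 7)) 0 7"
    by (rule c3.rel[OF hN _ _ _ _ _ p3_4_3]) simp_all
  have r_4_4: "snd (h (ez 4)) 4 = fst (h (ea 0 4)) 0 4 + fst (h (ea 0 0)) 0 0"
    by (rule c3.rel[OF hN _ _ _ _ _ p3_4_4]) simp_all
  have r_4_5: "snd (h (ez 5)) 5 = fst (h (ea 0 4)) 0 4 + fst (h (ea 0 1)) 0 1"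
    by (rule c3.rel[OF hN _ _ _ _ _ p3_4_5]) simp_all
  have r_4_6: "snd (h (ez 6)) 6 = fst (h (ea 0 4)) 0 4 + fst (h (ea 0 2)) 0 2"
    by (rule c3.rel[OF hN _ _ _ _ _ p3_4_6]) simp_all
  have r_4_7: "snd (h (ez 7)) 7 = fst (h (ea 0 4)) 0 4 + fst (h (ea 0 3)) 0 3"
    by (rule c3.rel[OF hN _ _ _ _ _ p3_4_7]) simp_all
  have r_5_1: "snd (h (ez 1)) 1 = fst (h (ea 0 5)) 0 5 + fst (h (ea 0 4)) 0 4"
    by (rule c3.rel[OF hN _ _ _ _ _ p3_5_1]) simp_all
  have r_5_2: "snd (h (ez 2)) 2 = fst (h (ea 0 5)) 0 5 + fst (h (ea 0 7)) 0 7"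
    by (rule c3.rel[OF hN _ _ _ _ _ p3_5_2]) simp_all
  have r_5_3: "snd (h (ez 3)) 3 = fst (h (ea 0 5)) 0 5 + fst (h (ea 0 6)) 0 6"
    by (rule c3.rel[OF hN _ _ _ _ _ p3_5_3]) simp_all
  have r_5_4: "snd (h (ez 4)) 4 = fst (h (ea 0 5)) 0 5 + fst (h (ea 0 1)) 0 1"
    by (rule c3.rel[OF hN _ _ _ _ _ p3_5_4]) simp_all
  have r_5_5: "snd (h (ez 5)) 5 = fst (h (ea 0 5)) 0 5 + fst (h (ea 0 0)) 0 0"
    by (rule c3.rel[OF hN _ _ _ _ _ p3_5_5]) simp_all
  have r_5_6: "snd (h (ez 6)) 6 = fst (h (ea 0 5)) 0 5 + fst (h (ea 0 3)) 0 3"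
    by (rule c3.rel[OF hN _ _ _ _ _ p3_5_6]) simp_all
  have r_5_7: "snd (h (ez 7)) 7 = fst (h (ea 0 5)) 0 5 + fst (h (ea 0 2)) 0 2"
    by (rule c3.rel[OF hN _ _ _ _ _ p3_5_7]) simp_all
  have r_6_1: "snd (h (ez 1)) 1 = fst (h (ea 0 6)) 0 6 + fst (h (ea 0 7)) 0 7"
    by (rule c3.rel[OF hN _ _ _ _ _ p3_6_1]) simp_all
  have r_6_2: "snd (h (ez 2)) 2 = fst (h (ea 0 6)) 0 6 + fst (h (ea 0 4)) 0 4"
    by (rule c3.rel[OF hN _ _ _ _ _ p3_6_2]) simp_all
  have r_6_3: "snd (h (ez 3)) 3 = fst (h (ea 0 6)) 0 6 + fst (h (ea 0 5)) 0 5"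
    by (rule c3.rel[OF hN _ _ _ _ _ p3_6_3]) simp_all
  have r_6_4: "snd (h (ez 4)) 4 = fst (h (ea 0 6)) 0 6 + fst (h (ea 0 2)) 0 2"
    by (rule c3.rel[OF hN _ _ _ _ _ p3_6_4]) simp_all
  have r_6_5: "snd (h (ez 5)) 5 = fst (h (ea 0 6)) 0 6 + fst (h (ea 0 3)) 0 3"
    by (rule c3.rel[OF hN _ _ _ _ _ p3_6_5]) simp_all
  have r_6_6: "snd (h (ez 6)) 6 = fst (h (ea 0 6)) 0 6 + fst (h (ea 0 0)) 0 0"
    by (rule c3.rel[OF hN _ _ _ _ _ p3_6_6]) simp_all
  have r_6_7: "snd (h (ez 7)) 7 = fst (h (ea 0 6)) 0 6 + fst (h (ea 0 1)) 0 1"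
    by (rule c3.rel[OF hN _ _ _ _ _ p3_6_7]) simp_all
  have r_7_1: "snd (h (ez 1)) 1 = fst (h (ea 0 7)) 0 7 + fst (h (ea 0 6)) 0 6"
    by (rule c3.rel[OF hN _ _ _ _ _ p3_7_1]) simp_all
  have r_7_2: "snd (h (ez 2)) 2 = fst (h (ea 0 7)) 0 7 + fst (h (ea 0 5)) 0 5"
    by (rule c3.rel[OF hN _ _ _ _ _ p3_7_2]) simp_all
  have r_7_3: "snd (h (ez 3)) 3 = fst (h (ea 0 7)) 0 7 + fst (h (ea 0 4)) 0 4"
    by (rule c3.rel[OF hN _ _ _ _ _ p3_7_3]) simp_all
  have r_7_4: "snd (h (ez 4)) 4 = fst (h (ea 0 7)) 0 7 + fst (h (ea 0 3)) 0 3"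
    by (rule c3.rel[OF hN _ _ _ _ _ p3_7_4]) simp_all
  have r_7_5: "snd (h (ez 5)) 5 = fst (h (ea 0 7)) 0 7 + fst (h (ea 0 2)) 0 2"
    by (rule c3.rel[OF hN _ _ _ _ _ p3_7_5]) simp_all
  have r_7_6: "snd (h (ez 6)) 6 = fst (h (ea 0 7)) 0 7 + fst (h (ea 0 1)) 0 1"
    by (rule c3.rel[OF hN _ _ _ _ _ p3_7_6]) simp_all
  have r_7_7: "snd (h (ez 7)) 7 = fst (h (ea 0 7)) 0 7 + fst (h (ea 0 0)) 0 0"
    by (rule c3.rel[OF hN _ _ _ _ _ p3_7_7]) simp_all
  have T1: "tr_alpha 3 1 h = fst (h (ea 0 0)) 0 0 + fst (h (ea 0 1)) 0 1 + fst (h (ea 0 2)) 0 2 + fst (h (ea 0 3)) 0 3 + fst (h (ea 0 4)) 0 4 + fst (h (ea 0 5)) 0 5 + fst (h (ea 0 6)) 0 6 + fst (h (ea 0 7)) 0 7" by (simp add: tr_alpha_def sum8)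
  have T2: "tr_2alpha 3 1 h = snd (h (ez 1)) 1 + snd (h (ez 2)) 2 + snd (h (ez 3)) 3 + snd (h (ez 4)) 4 + snd (h (ez 5)) 5 + snd (h (ez 6)) 6 + snd (h (ez 7)) 7" by (simp add: tr_2alpha_def sumI8)
  have S_1: "fst (h (ea 0 0)) 0 0 + fst (h (ea 0 1)) 0 1 + fst (h (ea 0 2)) 0 2 + fst (h (ea 0 3)) 0 3 + fst (h (ea 0 4)) 0 4 + fst (h (ea 0 5)) 0 5 + fst (h (ea 0 6)) 0 6 + fst (h (ea 0 7)) 0 7 = 4 * snd (h (ez 1)) 1" using r_0_1 r_2_1 r_4_1 r_6_1 by linarith
  have S_2: "fst (h (ea 0 0)) 0 0 + fst (h (ea 0 1)) 0 1 + fst (h (ea 0 2)) 0 2 + fst (h (ea 0 3)) 0 3 + fst (h (ea 0 4)) 0 4 + fst (h (ea 0 5)) 0 5 + fst (h (ea 0 6)) 0 6 + fst (h (ea 0 7)) 0 7 = 4 * snd (h (ez 2)) 2" using r_0_2 r_1_2 r_4_2 r_5_2 by linarith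
  have S_3: "fst (h (ea 0 0)) 0 0 + fst (h (ea 0 1)) 0 1 + fst (h (ea 0 2)) 0 2 + fst (h (ea 0 3)) 0 3 + fst (h (ea 0 4)) 0 4 + fst (h (ea 0 5)) 0 5 + fst (h (ea 0 6)) 0 6 + fst (h (ea 0 7)) 0 7 = 4 * snd (h (ez 3)) 3" using r_0_3 r_1_3 r_4_3 r_5_3 by linarith
  have S_4: "fst (h (ea 0 0)) 0 0 + fst (h (ea 0 1)) 0 1 + fst (h (ea 0 2)) 0 2 + fst (h (ea 0 3)) 0 3 + fst (h (ea 0 4)) 0 4 + fst (h (ea 0 5)) 0 5 + fst (h (ea 0 6)) 0 6 + fst (h (ea 0 7)) 0 7 = 4 * snd (h (ez 4)) 4" using r_0_4 r_1_4 r_2_4 r_3_4 by linarith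
  have S_5: "fst (h (ea 0 0)) 0 0 + fst (h (ea 0 1)) 0 1 + fst (h (ea 0 2)) 0 2 + fst (h (ea 0 3)) 0 3 + fst (h (ea 0 4)) 0 4 + fst (h (ea 0 5)) 0 5 + fst (h (ea 0 6)) 0 6 + fst (h (ea 0 7)) 0 7 = 4 * snd (h (ez 5)) 5" using r_0_5 r_1_5 r_2_5 r_3_5 by linarith
  have S_6: "fst (h (ea 0 0)) 0 0 + fst (h (ea 0 1)) 0 1 + fst (h (ea 0 2)) 0 2 + fst (h (ea 0 3)) 0 3 + fst (h (ea 0 4)) 0 4 + fst (h (ea 0 5)) 0 5 + fst (h (ea 0 6)) 0 6 + fst (h (ea 0 7)) 0 7 = 4 * snd (h (ez 6)) 6" using r_0_6 r_1_6 r_2_6 r_3_6 by linarith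
  have S_7: "fst (h (ea 0 0)) 0 0 + fst (h (ea 0 1)) 0 1 + fst (h (ea 0 2)) 0 2 + fst (h (ea 0 3)) 0 3 + fst (h (ea 0 4)) 0 4 + fst (h (ea 0 5)) 0 5 + fst (h (ea 0 6)) 0 6 + fst (h (ea 0 7)) 0 7 = 4 * snd (h (ez 7)) 7" using r_0_7 r_1_7 r_2_7 r_3_7 by linarith
  have all: "snd (h (ez 1)) 1 = 0 \<and> snd (h (ez 2)) 2 = 0 \<and> snd (h (ez 3)) 3 = 0 \<and> snd (h (ez 4)) 4 = 0 \<and> snd (h (ez 5)) 5 = 0 \<and> snd (h (ez 6)) 6 = 0 \<and> snd (h (ez 7)) 7 = 0"
    using NN_D(6)[OF hN] T1 T2 S_1 S_2 S_3 S_4 S_5 S_6 S_7 by linarith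
  show "0 < l \<Longrightarrow> l < 2^3 \<Longrightarrow> snd (h (ez l)) l = 0" using all by (auto simp: less8)
qed
lemma case3: "nendo 3 1 h \<Longrightarrow> (h \<in> NN 3 1 \<longleftrightarrow> (\<forall>x\<in>nn 3 1. h x = nzero))"
  by (rule c3.caseK[OF _ _ Cz3 vol3]) auto



lemma m1_0: "cd_mult 1 a b 0 = a 0 * b 0 - a (Suc 0) * b (Suc 0)"
  by (simp add: cd_join_def cd_lo_def cd_hi_def algebra_simps)
lemma m1_1: "cd_mult 1 a b (Suc 0) = a 0 * b (Suc 0) + a (Suc 0) * b 0"
  by (simp add: cd_join_def cd_lo_def cd_hi_def algebra_simps)
lemma c1_0: "cd_conj 1 a 0 = a 0" by (simp add: cd_join_def cd_lo_def cd_hi_def)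
lemma c1_1: "cd_conj 1 a (Suc 0) = - a (Suc 0)" by (simp add: cd_join_def cd_lo_def cd_hi_def)
lemma sum2: "(\<Sum>j<(2::nat). f j) = f 0 + f (Suc 0)" by (simp add: numeral_eq_Suc)
lemma sumI2: "sum f {Suc 0..<2} = f (Suc 0)" by (simp add: numeral_eq_Suc atLeastLessThanSuc)
lemma less2: "(j::nat) < 2 \<longleftrightarrow> j = 0 \<or> j = Suc 0" by auto

lemma cJ0: "fst (cJ x) i 0 = - fst x i (Suc 0)" by (simp add: cJ_def cd_join_def cd_lo_def cd_hi_def)
lemma cJ1: "fst (cJ x) i (Suc 0) = fst x i 0" by (simp add: cJ_def cd_join_def cd_lo_def cd_hi_def)
lemma cJhi: "2 \<le> j \<Longrightarrow> fst (cJ x) i j = 0" using cd_mult_hi0[of 1 j] by (simp add: cJ_def)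
lemma snd_cJ[simp]: "snd (cJ x) = (\<lambda>_. 0)" by (simp add: cJ_def)

lemma gA1: "gA 1 m v w = (\<Sum>i<m. v i 0 * w i 0 + v i (Suc 0) * w i (Suc 0))"
  by (simp add: gA_def sum2)

lemma L1: "snd (nbr 1 m p q) j = (if j = Suc 0 then 2 * gA 1 m (fst (cJ p)) (fst q) else 0)"
proof (cases "j = Suc 0")
  case True
  have "(\<Sum>i<m. cd_mult 1 (cd_conj 1 (fst p i)) (fst q i) (Suc 0)) = gA 1 m (fst (cJ p)) (fst q)"
    unfolding gA1 by (intro sum.cong) (auto simp: cJ0 cJ1 cd_join_def cd_lo_def cd_hi_def algebra_simps)
  then show ?thesis using True by (simp add: nbr_def cd_im_def)
next
  case False
  then show ?thesis by (auto simp: nbr_def cd_im_def)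
qed

lemma cJ_galpha: assumes "x \<in> galpha 1 m" shows "cJ x \<in> galpha 1 m"
proof -
  have "fst (cJ x) i j = 0" if "m \<le> i \<or> 2 \<le> j" for i j
  proof (cases "m \<le> i")
    case True
    then have "fst x i = (\<lambda>_. 0)" using assms by (auto simp: galpha_iff)
    then show ?thesis by (simp add: cJ_def cd_join_def cd_lo_def cd_hi_def)
  next
    case False
    then show ?thesis using that cJhi by auto
  qed
  then show ?thesis by (simp add: galpha_iff)
qed

lemma cJ_same: "fst x = fst y \<Longrightarrow> cJ x = cJ y" by (simp add: cJ_def)

lemma ea_diag: "fst (ea i a) i a = 1" by simp

lemma jcases: "(j::nat) = 0 \<or> j = Suc 0 \<or> 2 \<le> j" by auto

lemma cJ_ea: "cJ (ea i 0) = ea i (Suc 0)"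
proof -
  have "fst (cJ (ea i 0)) i' j = fst (ea i (Suc 0)) i' j" for i' j
    using jcases[of j] by (auto simp: cJ0 cJ1 cJhi)
  then show ?thesis by (simp add: nvec_eq del: fst_ea)
qed

lemma K1_fwd:
  assumes hN: "h \<in> NN 1 m" and m: "0 < m"
  shows "(\<forall>x\<in>galpha 1 m. h x \<in> galpha 1 m)
       \<and> (\<forall>x\<in>g2alpha 1 m. h x = nzero)
       \<and> selfadj 1 m h
       \<and> (\<forall>x\<in>galpha 1 m. nadd (cJ (h x)) (h (cJ x)) = nzero)"
proof -
  note D = NN_D[OF hN]
  define c where "c = snd (h (ez (Suc 0))) (Suc 0)"
  have ez1: "ez (Suc 0) \<in> nn 1 m" by (simp add: nn_iff)
  have rel: "c = fst (h (ea i 0)) i 0 + fst (h (ea i (Suc 0))) i (Suc 0)" if i: "i < m" for i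
  proof -
    have x: "ea i 0 \<in> galpha 1 m" and y: "ea i (Suc 0) \<in> galpha 1 m" using i by (auto intro: ea_galpha)
    have hy: "h (ea i (Suc 0)) \<in> galpha 1 m" using D(3) y by simp
    have "nbr 1 m (ea i 0) (ea i (Suc 0)) = nscale 2 (ez (Suc 0))"
      using i by (simp add: nvec_eq L1 L1[simplified] cJ_ea gA_ea ea_diag del: fst_ea)
    then have "nscale 2 (h (ez (Suc 0))) = nadd (nbr 1 m (h (ea i 0)) (ea i (Suc 0))) (nbr 1 m (ea i 0) (h (ea i (Suc 0))))"
      using D(5)[OF galpha_nn[OF x] galpha_nn[OF y]] hscale[OF D(1) ez1] by simp
    then have "2 * c = snd (nbr 1 m (h (ea i 0)) (ea i (Suc 0))) (Suc 0) + snd (nbr 1 m (ea i 0) (h (ea i (Suc 0)))) (Suc 0)"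
      unfolding c_def by (metis snd_nadd snd_nscale)
    also have "\<dots> = 2 * gA 1 m (fst (cJ (h (ea i 0)))) (fst (ea i (Suc 0))) + 2 * gA 1 m (fst (ea i (Suc 0))) (fst (h (ea i (Suc 0))))"
      by (simp add: L1 L1[simplified] cJ_ea del: fst_ea)
    also have "\<dots> = 2 * fst (h (ea i 0)) i 0 + 2 * fst (h (ea i (Suc 0))) i (Suc 0)"
      using i gA_ea[of i m "Suc 0" 1 "fst (h (ea i (Suc 0)))"] gA_sym[of 1 m "fst (ea i (Suc 0))"]
        gA_ea[of i m "Suc 0" 1 "fst (cJ (h (ea i 0)))"]
      by (simp add: cJ1 del: fst_ea)
    finally show ?thesis by simp
  qed
  have T1: "tr_alpha 1 m h = real m * c"
  proof -
    have "tr_alpha 1 m h = (\<Sum>i<m. c)" unfolding tr_alpha_def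
      by (rule sum.cong) (simp_all add: sum2 rel)
    then show ?thesis by simp
  qed
  have T2: "tr_2alpha 1 m h = c" by (simp add: tr_2alpha_def c_def sumI2)
  have "(real m + 2) * c = 0" using D(6) T1 T2 by (simp add: algebra_simps)
  then have c0: "c = 0" by (simp add: add_nonneg_eq_0_iff)
  have hez: "h (ez (Suc 0)) = nzero"
  proof -
    have g: "h (ez (Suc 0)) \<in> g2alpha 1 m" using D(4) ez_g2alpha[of "Suc 0" 1 m] by simp
    have "snd (h (ez (Suc 0))) j = 0" for j
      using jcases[of j] g c0 by (auto simp: g2alpha_iff c_def)
    then show ?thesis using g by (simp add: nvec_eq g2alpha_iff)
  qed
  have G2: "\<forall>x\<in>g2alpha 1 m. h x = nzero"
  proof
    fix x assume "x \<in> g2alpha 1 m"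
    moreover have "\<And>l. 0 < l \<Longrightarrow> l < 2^1 \<Longrightarrow> h (ez l) = nzero" using hez by (auto simp: less2)
    ultimately show "h x = nzero" using zero_on_g2alpha[OF D(1)] by blast
  qed
  have JH: "nadd (cJ (h x)) (h (cJ x)) = nzero" if x: "x \<in> galpha 1 m" for x
  proof -
    have hx: "h x \<in> galpha 1 m" using D(3) x by simp
    have Jx: "cJ x \<in> galpha 1 m" using cJ_galpha x by simp
    have hJx: "h (cJ x) \<in> galpha 1 m" using D(3) Jx by simp
    define w where "w = nadd (cJ (h x)) (h (cJ x))"
    have wg: "w \<in> galpha 1 m" using cJ_galpha[OF hx] hJx by (simp add: w_def galpha_add)
    have orth: "ninner 1 m w y = 0" if y: "y \<in> galpha 1 m" for y
    proof -
      have hy: "h y \<in> galpha 1 m" using D(3) y by simp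
      have "h (nbr 1 m x y) = nzero" using G2 nbr_g2alpha by blast
      then have "nadd (nbr 1 m (h x) y) (nbr 1 m x (h y)) = nzero"
        using D(5)[OF galpha_nn[OF x] galpha_nn[OF y]] by simp
      then have "snd (nbr 1 m (h x) y) (Suc 0) + snd (nbr 1 m x (h y)) (Suc 0) = 0"
        by (metis snd_nadd snd_nzero)
      then have e1: "gA 1 m (fst (cJ (h x))) (fst y) + gA 1 m (fst (cJ x)) (fst (h y)) = 0"
        by (simp add: L1 L1[simplified])
      have "gA 1 m (fst (cJ x)) (fst (h y)) = ninner 1 m (h y) (cJ x)"
        using Jx by (simp add: ninner_galpha gA_sym)
      also have "\<dots> = ninner 1 m y (h (cJ x))" using hsa[OF D(2) galpha_nn[OF y] galpha_nn[OF Jx]] .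
      also have "\<dots> = ninner 1 m (h (cJ x)) y" by (rule ninner_sym)
      finally have e2: "gA 1 m (fst (cJ x)) (fst (h y)) = ninner 1 m (h (cJ x)) y" .
      have "ninner 1 m w y = ninner 1 m (cJ (h x)) y + ninner 1 m (h (cJ x)) y"
        by (simp add: w_def ninner_add)
      also have "ninner 1 m (cJ (h x)) y = gA 1 m (fst (cJ (h x))) (fst y)" using y by (simp add: ninner_galpha)
      finally show ?thesis using e1 e2 by simp
    qed
    have "w = nzero" using ninner_self_zero[OF galpha_nn[OF wg] orth[OF wg]] .
    then show ?thesis by (simp add: w_def)
  qed
  show ?thesis using D(3) G2 D(2) JH by blast
qed

lemma K1_bwd:
  assumes e: "nendo 1 m h"
    and P1: "\<forall>x\<in>galpha 1 m. h x \<in> galpha 1 m"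
    and P2: "\<forall>x\<in>g2alpha 1 m. h x = nzero"
    and P3: "selfadj 1 m h"
    and P4: "\<forall>x\<in>galpha 1 m. nadd (cJ (h x)) (h (cJ x)) = nzero"
  shows "h \<in> NN 1 m"
proof -
  have anti: "cJ (h x) = nscale (-1) (h (cJ x))" if "x \<in> galpha 1 m" for x
  proof -
    have "nadd (cJ (h x)) (h (cJ x)) = nzero" using P4 that by blast
    then show ?thesis by (simp add: nvec_eq eq_neg_iff_add_eq_0)
  qed
  have split: "h x = h (fst x, (\<lambda>_. 0))" "(fst x, (\<lambda>_. 0)) \<in> galpha 1 m" if "x \<in> nn 1 m" for x
  proof -
    define xa :: nvec where "xa = (fst x, (\<lambda>_. 0))"
    define xz :: nvec where "xz = ((\<lambda>_ _. 0), snd x)"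
    have a: "xa \<in> galpha 1 m" using that by (simp add: xa_def galpha_iff nn_iff)
    have z: "xz \<in> g2alpha 1 m" using that by (simp add: xz_def g2alpha_iff nn_iff)
    have "x = nadd xa xz" by (simp add: nvec_eq xa_def xz_def)
    then have "h x = nadd (h xa) (h xz)" using hadd[OF e galpha_nn[OF a] g2alpha_nn[OF z]] by simp
    then show "h x = h (fst x, (\<lambda>_. 0))" using P2 z by (simp add: nvec_eq xa_def)
    show "(fst x, (\<lambda>_. 0)) \<in> galpha 1 m" using a by (simp add: xa_def)
  qed
  have der: "h (nbr 1 m x y) = nadd (nbr 1 m (h x) y) (nbr 1 m x (h y))"
    if x: "x \<in> nn 1 m" and y: "y \<in> nn 1 m" for x y
  proof -
    define xa :: nvec where "xa = (fst x, (\<lambda>_. 0))"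
    define ya :: nvec where "ya = (fst y, (\<lambda>_. 0))"
    have xa: "xa \<in> galpha 1 m" and hxa: "h x = h xa" using split[OF x] by (auto simp: xa_def)
    have ya: "ya \<in> galpha 1 m" and hya: "h y = h ya" using split[OF y] by (auto simp: ya_def)
    have Jxa: "cJ xa \<in> galpha 1 m" using cJ_galpha xa by simp
    have hya_g: "h ya \<in> galpha 1 m" using P1 ya by simp
    have "gA 1 m (fst (cJ (h x))) (fst y) = - gA 1 m (fst (cJ x)) (fst (h y))"
    proof -
      have "gA 1 m (fst (cJ (h x))) (fst y) = gA 1 m (fst (nscale (-1) (h (cJ xa)))) (fst ya)"
        using anti[OF xa] hxa by (simp add: ya_def)
      also have "\<dots> = - ninner 1 m (h (cJ xa)) ya"
        using ya by (simp add: ninner_galpha gA_def sum_negf)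
      also have "\<dots> = - ninner 1 m (cJ xa) (h ya)"
        using hsa[OF P3 galpha_nn[OF Jxa] galpha_nn[OF ya]] by simp
      also have "\<dots> = - gA 1 m (fst (cJ x)) (fst (h y))"
        using hya_g hya cJ_same[of xa x] by (simp add: ninner_galpha xa_def)
      finally show ?thesis .
    qed
    then have "nadd (nbr 1 m (h x) y) (nbr 1 m x (h y)) = nzero"
      by (simp add: nvec_eq L1 L1[simplified])
    moreover have "h (nbr 1 m x y) = nzero" using P2 nbr_g2alpha by blast
    ultimately show ?thesis by simp
  qed
  have t2: "tr_2alpha 1 m h = 0"
    using P2 ez_g2alpha[of "Suc 0" 1 m] by (simp add: tr_2alpha_def sumI2)
  have t1: "tr_alpha 1 m h = 0"
  proof -
    have "fst (h (ea i 0)) i 0 + fst (h (ea i (Suc 0))) i (Suc 0) = 0" if "i < m" for i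
    proof -
      have "nadd (cJ (h (ea i 0))) (h (cJ (ea i 0))) = nzero" using P4 ea_galpha[OF that, of 0 1] by simp
      then have "nadd (cJ (h (ea i 0))) (h (ea i (Suc 0))) = nzero" by (simp only: cJ_ea)
      then have "fst (nadd (cJ (h (ea i 0))) (h (ea i (Suc 0)))) i (Suc 0) = fst nzero i (Suc 0)" by simp
      then have "fst (cJ (h (ea i 0))) i (Suc 0) + fst (h (ea i (Suc 0))) i (Suc 0) = 0"
        by (simp only: fst_nadd fst_nzero)
      then show ?thesis by (simp add: cJ1)
    qed
    then show ?thesis unfolding tr_alpha_def by (simp add: sum2)
  qed
  show ?thesis using e P1 P2 P3 der t1 t2 by (auto simp: NN_def)
qed

lemma K0:
  assumes e: "nendo 0 m h"
  shows "h \<in> NN 0 m \<longleftrightarrow> selfadj 0 m h \<and> tr_alpha 0 m h = 0"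
proof -
  have ga: "galpha 0 m = nn 0 m"
    by (auto simp: galpha_iff nn_iff fun_eq_iff) (metis One_nat_def less_one not_le)
  have g2: "x \<in> g2alpha 0 m \<Longrightarrow> x = nzero" for x
    by (auto simp: g2alpha_iff nvec_eq) (metis One_nat_def less_one not_le)
  have nb: "nbr 0 m x y = nzero" for x y by (simp add: nbr_def cd_im_def nvec_eq)
  have t2: "tr_2alpha 0 m h = 0" by (simp add: tr_2alpha_def)
  have g2h: "\<forall>x\<in>g2alpha 0 m. h x \<in> g2alpha 0 m"
  proof
    fix x assume "x \<in> g2alpha 0 m"
    then have "x = nzero" by (rule g2)
    then show "h x \<in> g2alpha 0 m" using hzero[OF e] by simp
  qed
  have gah: "\<forall>x\<in>galpha 0 m. h x \<in> galpha 0 m" using hnn[OF e] by (simp add: ga)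
  have der: "\<forall>x\<in>nn 0 m. \<forall>y\<in>nn 0 m. h (nbr 0 m x y) = nadd (nbr 0 m (h x) y) (nbr 0 m x (h y))"
    using hzero[OF e] by (simp add: nb)
  show ?thesis
    using e g2h gah der unfolding NN_def by (simp add: t2)
qed


theorem lemma5p12:
  shows "(\<forall>n::nat. n \<ge> 2 \<longrightarrow> (\<forall>h. nendo 0 (n - 1) h \<longrightarrow>
            (h \<in> NN 0 (n - 1) \<longleftrightarrow> selfadj 0 (n - 1) h \<and> tr_alpha 0 (n - 1) h = 0)))
       \<and> (\<forall>n::nat. n \<ge> 2 \<longrightarrow> (\<forall>h. nendo 1 (n - 1) h \<longrightarrow>
            (h \<in> NN 1 (n - 1) \<longleftrightarrow>
               (\<forall>x\<in>galpha 1 (n - 1). h x \<in> galpha 1 (n - 1))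
             \<and> (\<forall>x\<in>g2alpha 1 (n - 1). h x = nzero)
             \<and> selfadj 1 (n - 1) h
             \<and> (\<forall>x\<in>galpha 1 (n - 1). nadd (cJ (h x)) (h (cJ x)) = nzero))))
       \<and> (\<forall>n::nat. n \<ge> 2 \<longrightarrow> (\<forall>h. nendo 2 (n - 1) h \<longrightarrow>
            (h \<in> NN 2 (n - 1) \<longleftrightarrow> (\<forall>x\<in>nn 2 (n - 1). h x = nzero))))
       \<and> (\<forall>h. nendo 3 1 h \<longrightarrow> (h \<in> NN 3 1 \<longleftrightarrow> (\<forall>x\<in>nn 3 1. h x = nzero)))"
proof -
  have P1: "\<forall>n::nat. n \<ge> 2 \<longrightarrow> (\<forall>h. nendo 0 (n - 1) h \<longrightarrow>
            (h \<in> NN 0 (n - 1) \<longleftrightarrow> selfadj 0 (n - 1) h \<and> tr_alpha 0 (n - 1) h = 0))"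
    using K0 by blast
  have P2: "\<forall>n::nat. n \<ge> 2 \<longrightarrow> (\<forall>h. nendo 1 (n - 1) h \<longrightarrow>
            (h \<in> NN 1 (n - 1) \<longleftrightarrow>
               (\<forall>x\<in>galpha 1 (n - 1). h x \<in> galpha 1 (n - 1))
             \<and> (\<forall>x\<in>g2alpha 1 (n - 1). h x = nzero)
             \<and> selfadj 1 (n - 1) h
             \<and> (\<forall>x\<in>galpha 1 (n - 1). nadd (cJ (h x)) (h (cJ x)) = nzero)))"
  proof (intro allI impI)
    fix n :: nat and h assume n: "n \<ge> 2" and e: "nendo 1 (n - 1) h"
    have m: "0 < n - 1" using n by simp
    show "h \<in> NN 1 (n - 1) \<longleftrightarrow>
               (\<forall>x\<in>galpha 1 (n - 1). h x \<in> galpha 1 (n - 1))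
             \<and> (\<forall>x\<in>g2alpha 1 (n - 1). h x = nzero)
             \<and> selfadj 1 (n - 1) h
             \<and> (\<forall>x\<in>galpha 1 (n - 1). nadd (cJ (h x)) (h (cJ x)) = nzero)"
      using K1_fwd[OF _ m, of h] K1_bwd[OF e] by blast
  qed
  have P3: "\<forall>n::nat. n \<ge> 2 \<longrightarrow> (\<forall>h. nendo 2 (n - 1) h \<longrightarrow>
            (h \<in> NN 2 (n - 1) \<longleftrightarrow> (\<forall>x\<in>nn 2 (n - 1). h x = nzero)))"
  proof (intro allI impI)
    fix n :: nat and h assume n: "n \<ge> 2" and e: "nendo 2 (n - 1) h"
    have m: "0 < n - 1" using n by simp
    show "h \<in> NN 2 (n - 1) \<longleftrightarrow> (\<forall>x\<in>nn 2 (n - 1). h x = nzero)"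
      using case2[OF e m] .
  qed
  have P4: "\<forall>h. nendo 3 1 h \<longrightarrow> (h \<in> NN 3 1 \<longleftrightarrow> (\<forall>x\<in>nn 3 1. h x = nzero))"
    using case3 by blast
  show ?thesis using P1 P2 P3 P4 by blast
qed

end
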